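(* Assume an i.i.d. sample of $(Y,X)$ of size $n$ from the Gaussian functional linear model, and let $[\ell]_j^2=j^{-2s}$ for all $j\ge1$. Then the order of $\mathcal R^\ell_*[(1+\log n)n^{-1}]$ is as follows. (pp) If $\beta_j=j^{2p}$, $\gamma_j=j^{-2a}$ with $p>0$, $a>1/2$, $p+a\ge3/2$ and $s>1/2-p$, then $\mathcal R^\ell_*[(1+\log n)n^{-1}]\asymp (n^{-1}\log n)^{(2p+2s-1)/(2p+2a)}$ if $s-a<1/2$; $\asymp n^{-1}(\log n)^2$ if $s-a=1/2$; $\asymp n^{-1}\log n$ if $s-a>1/2$. (pe) If $\beta_j=j^{2p}$, $\gamma_j=\exp(-j^{2a}+1)$ with $p>0$, $a>0$ and $s>1/2-p$, then $\mathcal R^\ell_*[(1+\log n)n^{-1}]\asymp(\log n)^{-(2p+2s-1)/(2a)}$. (ep) If $\beta_j=\exp(j^{2p}-1)$, $\gamma_j=j^{-2a}$ with $p>0$, $a>1/2$ and $s\in\mathbb R$, then $\mathcal R^\ell_*[(1+\log n)n^{-1}]\asymp n^{-1}(\log n)^{(2p+2a-2s+1)/(2p)}$ if $s-a<1/2$; $\asymp n^{-1}(\log n)(\log\log n)$ if $s-a=1/2$; $\asymp n^{-1}\log n$ if $s-a>1/2$.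
   Context: For strictly positive sequences $\beta,\gamma$ and real numbers $[\ell]_j$, $j\ge1$, define for $m\ge1$ and $x\in(0,1]$ $$\mathcal R^\ell_m[x]:=\max\Big\{\sum_{j>m}\frac{[\ell]_j^2}{\beta_j},\ \max\Big(\frac{\gamma_m}{\beta_m},x\Big)\sum_{j=1}^m\frac{[\ell]_j^2}{\gamma_j}\Big\},\qquad\mathcal R^\ell_*[x]:=\min_{m\ge1}\mathcal R^\ell_m[x].$$ (In the paper $\beta$ describes the ellipsoid $\{h:\sum_j\beta_j\langle h,\psi_j\rangle^2\le r\}$ of slope functions, $\gamma$ the decay of the covariance operator, and $[\ell]_j=\ell(\psi_j)$ the coefficients of the linear functional.) For positive sequences, $x_n\asymp y_n$ means $x_n/y_n$ is bounded away from zero and infinity. *)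

theory Defs
  imports "HOL-Analysis.Analysis" "HOL-Library.Landau_Symbols"
begin

text \<open>Sequences are indexed from 1; the value at index 0 is irrelevant.
  R_m[x] = max (sum_{j>m} l_j^2/beta_j) (max(gamma_m/beta_m, x) * sum_{j=1}^m l_j^2/gamma_j).\<close>

definition Rm :: "(nat \<Rightarrow> real) \<Rightarrow> (nat \<Rightarrow> real) \<Rightarrow> (nat \<Rightarrow> real) \<Rightarrow> nat \<Rightarrow> real \<Rightarrow> real" where
  "Rm \<beta> \<gamma> l m x =
     max (\<Sum>\<^sub>\<infinity>j\<in>{m<..}. (l j)\<^sup>2 / \<beta> j)
         (max (\<gamma> m / \<beta> m) x * (\<Sum>j=1..m. (l j)\<^sup>2 / \<gamma> j))"

definition Rstar :: "(nat \<Rightarrow> real) \<Rightarrow> (nat \<Rightarrow> real) \<Rightarrow> (nat \<Rightarrow> real) \<Rightarrow> real \<Rightarrow> real" where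
  "Rstar \<beta> \<gamma> l x = (INF m\<in>{1..}. Rm \<beta> \<gamma> l m x)"

end

theory Submission
  imports Defs "HOL-Real_Asymp.Real_Asymp"
begin

lemma exp_poly_bound:
  fixes u k :: real assumes "0 \<le> u" "0 < k"
  shows "u powr k \<le> k powr k * exp u"
proof -
  have "u / k \<le> exp (u / k)" using exp_ge_add_one_self[of "u/k"] by linarith
  hence "(u / k) powr k \<le> exp (u/k) powr k" using assms by (intro powr_mono2) auto
  also have "exp (u/k) powr k = exp u" using assms by (simp add: powr_def)
  finally have "(u/k) powr k \<le> exp u" .
  moreover have "(u/k) powr k = u powr k / k powr k" using assms by (simp add: powr_divide)
  ultimately show ?thesis using assms by (simp add: divide_le_eq mult.commute)
qed

lemma mvt_powr:
  fixes u v e :: real assumes "0 < u" "u < v"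
  shows "\<exists>z. u < z \<and> z < v \<and> v powr e - u powr e = (v - u) * (e * z powr (e - 1))"
proof -
  have "\<And>z. u \<le> z \<Longrightarrow> z \<le> v \<Longrightarrow> ((\<lambda>t. t powr e) has_real_derivative (e * z powr (e - 1))) (at z)"
    using assms by (auto intro!: derivative_eq_intros simp: powr_diff field_simps)
  from MVT2[OF assms(2) this] show ?thesis by auto
qed

lemma telescope_le:
  fixes f g :: "nat \<Rightarrow> real"
  assumes "m \<le> N" "\<And>j. m < j \<Longrightarrow> j \<le> N \<Longrightarrow> f j \<le> g (j - 1) - g j"
  shows "(\<Sum>j\<in>{m<..N}. f j) \<le> g m - g N"
  using assms
proof (induction N rule: dec_induct)
  case base then show ?case by simp
next
  case (step n)
  have "{m<..Suc n} = insert (Suc n) {m<..n}" using step by auto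
  hence "(\<Sum>j\<in>{m<..Suc n}. f j) = f (Suc n) + (\<Sum>j\<in>{m<..n}. f j)" by simp
  also have "\<dots> \<le> (g n - g (Suc n)) + (g m - g n)"
    using step.prems[of "Suc n"] step.IH step.prems step.hyps by (intro add_mono) auto
  finally show ?case by simp
qed

lemma telescope_ge:
  fixes f g :: "nat \<Rightarrow> real"
  assumes "m \<le> N" "\<And>j. m < j \<Longrightarrow> j \<le> N \<Longrightarrow> f j \<ge> g (j - 1) - g j"
  shows "(\<Sum>j\<in>{m<..N}. f j) \<ge> g m - g N"
proof -
  have "(\<Sum>j\<in>{m<..N}. - f j) \<le> (- g m) - (- g N)"
    by (rule telescope_le[OF assms(1)]) (use assms(2) in force)
  then show ?thesis by (simp add: sum_negf)
qed

lemma tail_infsum_le: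
  fixes f :: "nat \<Rightarrow> real"
  assumes nn: "\<And>j. m < j \<Longrightarrow> 0 \<le> f j" and b: "\<And>N. (\<Sum>j\<in>{m<..N}. f j) \<le> B"
  shows "f summable_on {m<..}" "infsum f {m<..} \<le> B"
proof -
  have fs: "sum f F \<le> B" if "finite F" "F \<subseteq> {m<..}" for F
  proof (cases "F = {}")
    case True then show ?thesis using b[of m] by simp
  next
    case False
    have "F \<subseteq> {m<..Max F}" using that False by auto
    hence "sum f F \<le> sum f {m<..Max F}" using nn by (intro sum_mono2) auto
    also have "\<dots> \<le> B" by (rule b)
    finally show ?thesis .
  qed
  show s: "f summable_on {m<..}"
    by (rule nonneg_bdd_above_summable_on) (use nn fs in \<open>auto simp: bdd_above_def\<close>)
  show "infsum f {m<..} \<le> B" by (rule infsum_le_finite_sums[OF s fs])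
qed

lemma power_tail_step:
  fixes q :: real assumes "q > 1" "2 \<le> j"
  shows "real j powr (-q) \<le> (real (j - 1) powr (1 - q) - real j powr (1 - q)) / (q - 1)"
proof -
  have j1: "real (j - 1) = real j - 1" using assms by auto
  obtain z where z: "real j - 1 < z" "z < real j"
    "real j powr (1-q) - (real j - 1) powr (1-q) = (real j - (real j - 1)) * ((1-q) * z powr (1 - q - 1))"
    using mvt_powr[of "real j - 1" "real j" "1-q"] assms by auto
  have "real j powr (-q) \<le> z powr (-q)" using z assms by (intro powr_mono2') auto
  hence "(q-1) * real j powr (-q) \<le> (q-1) * z powr (-q)" using assms by (intro mult_left_mono) auto
  with z(3) show ?thesis using assms j1 by (simp add: field_simps)
qed

lemma power_tail_sum:
  fixes q :: real assumes "q > 1" "1 \<le> m"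
  shows "(\<Sum>j\<in>{m<..N}. real j powr (-q)) \<le> real m powr (1 - q) / (q - 1)"
proof (cases "m \<le> N")
  case True
  have "(\<Sum>j\<in>{m<..N}. real j powr (-q)) \<le> real m powr (1 - q) / (q - 1) - real N powr (1 - q) / (q - 1)"
    using telescope_le[OF True, of "\<lambda>j. real j powr (-q)" "\<lambda>j. real j powr (1 - q) / (q - 1)"]
      power_tail_step[OF assms(1)] assms by (auto simp: diff_divide_distrib)
  also have "\<dots> \<le> real m powr (1 - q) / (q - 1)" using assms by simp
  finally show ?thesis .
next
  case False then show ?thesis using assms by simp
qed

lemma power_tail:
  fixes q :: real assumes "q > 1" "1 \<le> m"
  shows "(\<lambda>j. real j powr (-q)) summable_on {m<..}"
    "infsum (\<lambda>j. real j powr (-q)) {m<..} \<le> real m powr (1 - q) / (q - 1)"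
    "infsum (\<lambda>j. real j powr (-q)) {m<..} \<ge> 2 powr (-q) * real m powr (1 - q)"
proof -
  show s: "(\<lambda>j. real j powr (-q)) summable_on {m<..}"
    "infsum (\<lambda>j. real j powr (-q)) {m<..} \<le> real m powr (1 - q) / (q - 1)"
    using tail_infsum_le[of m "\<lambda>j. real j powr (-q)", OF _ power_tail_sum[OF assms]] by auto
  have "real (card {m<..2*m}) * (real (2*m) powr (-q)) \<le> (\<Sum>j\<in>{m<..2*m}. real j powr (-q))"
    using assms by (intro sum_bounded_below powr_mono2') auto
  also have "\<dots> \<le> infsum (\<lambda>j. real j powr (-q)) {m<..}"
    by (rule finite_sum_le_infsum[OF s(1)]) auto
  finally have "real m * (real (2*m) powr (-q)) \<le> infsum (\<lambda>j. real j powr (-q)) {m<..}" by simp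
  moreover have "real m * (real (2*m) powr (-q)) = 2 powr (-q) * real m powr (1 - q)"
    using assms by (simp add: powr_mult powr_diff powr_minus field_simps)
  ultimately show "infsum (\<lambda>j. real j powr (-q)) {m<..} \<ge> 2 powr (-q) * real m powr (1 - q)" by simp
qed

lemma sum_split1:
  fixes f :: "nat \<Rightarrow> real" assumes "1 \<le> m"
  shows "(\<Sum>j=1..m. f j) = f 1 + (\<Sum>j\<in>{1<..m}. f j)"
proof -
  have "{1..m} = insert 1 {1<..m}" using assms by auto
  thus ?thesis by simp
qed

lemma psum_step:
  fixes r :: real assumes "r > -1" "2 \<le> j"
  shows "r \<ge> 0 \<Longrightarrow> real j powr (r+1) / (r+1) - real (j-1) powr (r+1) / (r+1) \<le> real j powr r"
    and "r \<le> 0 \<Longrightarrow> real j powr (r+1) / (r+1) - real (j-1) powr (r+1) / (r+1) \<ge> real j powr r"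
proof -
  have j1: "real (j - 1) = real j - 1" using assms by auto
  obtain z where z: "real j - 1 < z" "z < real j"
    "real j powr (r+1) - (real j - 1) powr (r+1) = (real j - (real j - 1)) * ((r+1) * z powr (r + 1 - 1))"
    using mvt_powr[of "real j - 1" "real j" "r+1"] assms by auto
  have eq: "real j powr (r+1) / (r+1) - real (j-1) powr (r+1) / (r+1) = z powr r"
  proof -
    have "real j powr (r+1) - real (j-1) powr (r+1) = (r+1) * z powr r" using z(3) j1 by simp
    hence "(real j powr (r+1) - real (j-1) powr (r+1)) / (r+1) = z powr r" using assms by simp
    thus ?thesis by (simp add: diff_divide_distrib)
  qed
  show "r \<ge> 0 \<Longrightarrow> real j powr (r+1) / (r+1) - real (j-1) powr (r+1) / (r+1) \<le> real j powr r"
    unfolding eq using z assms by (intro powr_mono2) auto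
  show "r \<le> 0 \<Longrightarrow> real j powr (r+1) / (r+1) - real (j-1) powr (r+1) / (r+1) \<ge> real j powr r"
    unfolding eq using z assms by (intro powr_mono2') auto
qed

lemma psum_pos:
  fixes r :: real assumes "r > -1" "1 \<le> m"
  shows "min 1 (1/(r+1)) * real m powr (r+1) \<le> (\<Sum>j=1..m. real j powr r)"
    "(\<Sum>j=1..m. real j powr r) \<le> max 1 (1/(r+1)) * real m powr (r+1)"
proof -
  define F where "F = (\<lambda>j::nat. real j powr (r+1) / (r+1))"
  have split: "(\<Sum>j=1..m. real j powr r) = 1 + (\<Sum>j\<in>{1<..m}. real j powr r)"
    using sum_split1[OF assms(2)] by simp
  have card: "card {1..m} = m" by simp
  have mp: "real m * real m powr r = real m powr (r+1)"
    using assms by (simp add: powr_add)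
  have F1: "F 1 = 1/(r+1)" by (simp add: F_def)
  have Fm: "F m = real m powr (r+1) / (r+1)" by (simp add: F_def)
  have mp1: "real m powr (r+1) \<ge> 1" using assms by (intro ge_one_powr_ge_zero) auto
  have r1: "r + 1 > 0" using assms by simp
  show "min 1 (1/(r+1)) * real m powr (r+1) \<le> (\<Sum>j=1..m. real j powr r)"
  proof (cases "r \<ge> 0")
    case True
    have "(\<Sum>j\<in>{1<..m}. real j powr r) \<ge> F m - F 1"
      using telescope_ge[OF assms(2), where f="\<lambda>j. real j powr r" and g="\<lambda>j. - F j"]
        psum_step(1)[of r] True assms unfolding F_def by force
    hence "(\<Sum>j=1..m. real j powr r) \<ge> F m" using split F1 True r1
      by (smt (verit) divide_le_eq_1_pos)
    moreover have "min 1 (1/(r+1)) * real m powr (r+1) \<le> (1/(r+1)) * real m powr (r+1)"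
      by (intro mult_right_mono) auto
    moreover have "(1/(r+1)) * real m powr (r+1) = F m" using Fm by simp
    ultimately show ?thesis by linarith
  next
    case False
    have "real (card {1..m}) * real m powr r \<le> (\<Sum>j=1..m. real j powr r)"
      using False by (intro sum_bounded_below powr_mono2') auto
    hence "real m powr (r+1) \<le> (\<Sum>j=1..m. real j powr r)" using mp by simp
    moreover have "min 1 (1/(r+1)) * real m powr (r+1) \<le> 1 * real m powr (r+1)"
      by (intro mult_right_mono) auto
    ultimately show ?thesis by linarith
  qed
  show "(\<Sum>j=1..m. real j powr r) \<le> max 1 (1/(r+1)) * real m powr (r+1)"
  proof (cases "r \<ge> 0")
    case False
    have "(\<Sum>j\<in>{1<..m}. real j powr r) \<le> F m - F 1"
      using telescope_le[OF assms(2), of "\<lambda>j. real j powr r" "\<lambda>j. - F j"]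
        psum_step(2)[of r] False assms unfolding F_def by force
    hence "(\<Sum>j=1..m. real j powr r) \<le> F m" using split F1 False r1
      by (smt (verit) le_divide_eq_1_pos)
    moreover have "(1/(r+1)) * real m powr (r+1) \<le> max 1 (1/(r+1)) * real m powr (r+1)"
      by (intro mult_right_mono) auto
    moreover have "(1/(r+1)) * real m powr (r+1) = F m" using Fm by simp
    ultimately show ?thesis by linarith
  next
    case True
    have "(\<Sum>j=1..m. real j powr r) \<le> real (card {1..m}) * real m powr r"
      using True by (intro sum_bounded_above powr_mono2) auto
    hence "(\<Sum>j=1..m. real j powr r) \<le> real m powr (r+1)" using mp by simp
    moreover have "1 * real m powr (r+1) \<le> max 1 (1/(r+1)) * real m powr (r+1)"
      by (intro mult_right_mono) auto
    ultimately show ?thesis by linarith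
  qed
qed

lemma psum_harm:
  assumes "1 \<le> m"
  shows "ln (real m + 1) \<le> (\<Sum>j=1..m. real j powr (-1))"
    "(\<Sum>j=1..m. real j powr (-1)) \<le> 1 + ln (real m)"
proof -
  have h: "(\<Sum>j=1..m. real j powr (-1)) = harm m"
    unfolding harm_def by (intro sum.cong) (auto simp: powr_minus)
  show "ln (real m + 1) \<le> (\<Sum>j=1..m. real j powr (-1))" unfolding h by (rule harm_ge_ln)
  have "(\<Sum>j\<in>{1<..m}. real j powr (-1)) \<le> (- ln (real 1)) - (- ln (real m))"
  proof (rule telescope_le[OF assms])
    fix j assume j: "1 < j" "j \<le> m"
    have "ln (real (j-1) / real j) \<le> real (j-1) / real j - 1" using j by (intro ln_le_minus_one) auto
    moreover have "real (j-1) / real j - 1 = - (real j powr (-1))" using j by (simp add: powr_minus field_simps of_nat_diff)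
    moreover have "ln (real (j-1) / real j) = ln (real (j-1)) - ln (real j)" using j by (simp add: ln_div)
    ultimately show "real j powr (-1) \<le> - ln (real (j - 1)) - - ln (real j)" by linarith
  qed
  thus "(\<Sum>j=1..m. real j powr (-1)) \<le> 1 + ln (real m)" using sum_split1[OF assms, of "\<lambda>j. real j powr (-1)"] by simp
qed

lemma psum_neg:
  fixes r :: real assumes "r < -1" "1 \<le> m"
  shows "1 \<le> (\<Sum>j=1..m. real j powr r)" "(\<Sum>j=1..m. real j powr r) \<le> 1 + 1 / (-r-1)"
proof -
  have split: "(\<Sum>j=1..m. real j powr r) = 1 + (\<Sum>j\<in>{1<..m}. real j powr r)"
    using sum_split1[OF assms(2)] by simp
  have "(\<Sum>j\<in>{1<..m}. real j powr r) \<ge> 0" by (intro sum_nonneg) auto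
  thus "1 \<le> (\<Sum>j=1..m. real j powr r)" using split by simp
  have "(\<Sum>j\<in>{1<..m}. real j powr (-(-r))) \<le> real 1 powr (1 - (-r)) / (-r - 1)"
    by (rule power_tail_sum) (use assms in auto)
  thus "(\<Sum>j=1..m. real j powr r) \<le> 1 + 1 / (-r-1)" using split by simp
qed

lemma Rm_nonneg:
  assumes "\<And>j. 0 \<le> \<beta> j"
  shows "0 \<le> Rm \<beta> \<gamma> l m x"
proof -
  have "0 \<le> (\<Sum>\<^sub>\<infinity>j\<in>{m<..}. (l j)\<^sup>2 / \<beta> j)" using assms by (intro infsum_nonneg) auto
  thus ?thesis unfolding Rm_def by linarith
qed

lemma Rstar_le:
  assumes "\<And>j. 0 \<le> \<beta> j" "1 \<le> m"
  shows "Rstar \<beta> \<gamma> l x \<le> Rm \<beta> \<gamma> l m x"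
  unfolding Rstar_def
proof (rule cINF_lower)
  show "bdd_below ((\<lambda>m. Rm \<beta> \<gamma> l m x) ` {1..})"
    by (rule bdd_belowI[where m=0]) (use Rm_nonneg[OF assms(1)] in auto)
qed (use assms in auto)

lemma Rstar_ge:
  assumes "\<And>m. 1 \<le> m \<Longrightarrow> c \<le> Rm \<beta> \<gamma> l m x"
  shows "c \<le> Rstar \<beta> \<gamma> l x"
  unfolding Rstar_def by (rule cINF_greatest) (use assms in auto)

lemma Rm_le:
  assumes "(\<Sum>\<^sub>\<infinity>j\<in>{m<..}. (l j)\<^sup>2 / \<beta> j) \<le> A"
    "max (\<gamma> m / \<beta> m) x * (\<Sum>j=1..m. (l j)\<^sup>2 / \<gamma> j) \<le> B"
  shows "Rm \<beta> \<gamma> l m x \<le> max A B"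
  using assms unfolding Rm_def by linarith

lemma Rm_ge_tail: "(\<Sum>\<^sub>\<infinity>j\<in>{m<..}. (l j)\<^sup>2 / \<beta> j) \<le> Rm \<beta> \<gamma> l m x"
  unfolding Rm_def by linarith

lemma Rm_ge_x:
  assumes "0 \<le> (\<Sum>j=1..m. (l j)\<^sup>2 / \<gamma> j)"
  shows "x * (\<Sum>j=1..m. (l j)\<^sup>2 / \<gamma> j) \<le> Rm \<beta> \<gamma> l m x"
    "(\<gamma> m / \<beta> m) * (\<Sum>j=1..m. (l j)\<^sup>2 / \<gamma> j) \<le> Rm \<beta> \<gamma> l m x"
proof -
  have "x * (\<Sum>j=1..m. (l j)\<^sup>2 / \<gamma> j) \<le> max (\<gamma> m / \<beta> m) x * (\<Sum>j=1..m. (l j)\<^sup>2 / \<gamma> j)"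
    using assms by (intro mult_right_mono) auto
  thus "x * (\<Sum>j=1..m. (l j)\<^sup>2 / \<gamma> j) \<le> Rm \<beta> \<gamma> l m x" unfolding Rm_def by linarith
  have "(\<gamma> m / \<beta> m) * (\<Sum>j=1..m. (l j)\<^sup>2 / \<gamma> j) \<le> max (\<gamma> m / \<beta> m) x * (\<Sum>j=1..m. (l j)\<^sup>2 / \<gamma> j)"
    using assms by (intro mult_right_mono) auto
  thus "(\<gamma> m / \<beta> m) * (\<Sum>j=1..m. (l j)\<^sup>2 / \<gamma> j) \<le> Rm \<beta> \<gamma> l m x" unfolding Rm_def by linarith
qed

lemma ceil_bounds:
  fixes y :: real assumes "1 \<le> y"
  shows "1 \<le> nat \<lceil>y\<rceil>" "y \<le> real (nat \<lceil>y\<rceil>)" "real (nat \<lceil>y\<rceil>) \<le> 2 * y"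
proof -
  show "1 \<le> nat \<lceil>y\<rceil>" using assms by linarith
  show "y \<le> real (nat \<lceil>y\<rceil>)" using assms by linarith
  show "real (nat \<lceil>y\<rceil>) \<le> 2 * y" using assms by linarith
qed

lemma pp_terms:
  fixes p s :: real
  assumes hl: "\<forall>j\<ge>1. (l j)\<^sup>2 = real j powr (-2 * s)" and "1 \<le> m"
  shows "(\<Sum>\<^sub>\<infinity>j\<in>{m<..}. (l j)\<^sup>2 / real j powr (2*p)) = (\<Sum>\<^sub>\<infinity>j\<in>{m<..}. real j powr (- (2*p+2 * s)))"
proof (rule infsum_cong)
  fix j assume "j \<in> {m<..}"
  hence "j \<ge> 1" using assms by auto
  hence "(l j)\<^sup>2 / real j powr (2*p) = real j powr (-2 * s - 2*p)"
    using hl by (simp add: powr_diff)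
  also have "\<dots> = real j powr (- (2*p+2 * s))"
    by (rule arg_cong[where f="\<lambda>e. real j powr e"]) simp
  finally show "(l j)\<^sup>2 / real j powr (2*p) = real j powr (- (2*p+2 * s))" .
qed

lemma pp_tail:
  fixes p s :: real
  assumes hl: "\<forall>j\<ge>1. (l j)\<^sup>2 = real j powr (-2 * s)" and "1 \<le> m" and t: "2*p+2 * s-1 > 0"
  shows "(\<Sum>\<^sub>\<infinity>j\<in>{m<..}. (l j)\<^sup>2 / real j powr (2*p)) \<le> real m powr (- (2*p+2 * s-1)) / (2*p+2 * s-1)"
    "(\<Sum>\<^sub>\<infinity>j\<in>{m<..}. (l j)\<^sup>2 / real j powr (2*p)) \<ge> 2 powr (- (2*p+2 * s)) * real m powr (- (2*p+2 * s-1))"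
  using power_tail[of "2*p+2 * s" m] pp_terms[OF hl assms(2), of p] assms by (auto simp: algebra_simps)

lemma psum_terms:
  fixes a s :: real
  assumes hl: "\<forall>j\<ge>1. (l j)\<^sup>2 = real j powr (-2 * s)"
  shows "(\<Sum>j=1..m. (l j)\<^sup>2 / real j powr (-2*a)) = (\<Sum>j=1..m. real j powr (2*a-2 * s))"
proof (rule sum.cong)
  fix j assume "j \<in> {1..m}"
  thus "(l j)\<^sup>2 / real j powr (-2*a) = real j powr (2*a-2 * s)"
    using hl by (simp add: powr_diff powr_minus field_simps)
qed simp

lemma powr_ge1_neg:
  fixes x e :: real assumes "0 < x" "x \<le> 1" "0 \<le> e"
  shows "1 \<le> x powr (-e)"
proof -
  have "x powr e \<le> 1 powr e" using assms by (intro powr_mono2) auto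
  hence "x powr e \<le> 1" by simp
  moreover have "x powr e > 0" using assms by simp
  ultimately show ?thesis using assms by (simp add: powr_minus field_simps)
qed

lemma pp_ratio:
  fixes p a :: real assumes "1 \<le> m"
  shows "real m powr (-2*a) / real m powr (2*p) = real m powr (- (2*p+2*a))"
proof -
  have "real m powr (-2*a) / real m powr (2*p) = real m powr (-2*a - 2*p)"
    by (simp add: powr_diff)
  also have "\<dots> = real m powr (- (2*p+2*a))"
    by (rule arg_cong[where f="\<lambda>e. real m powr e"]) simp
  finally show ?thesis .
qed

lemma PP1:
  fixes p a s :: real
  assumes hl: "\<forall>j\<ge>1. (l j)\<^sup>2 = real j powr (-2 * s)"
    and p: "p > 0" and a: "a > 0" and t: "2*p+2 * s-1 > 0" and r: "2*a-2 * s > -1"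
  shows "\<exists>c C. 0 < c \<and> 0 < C \<and> (\<forall>x. 0 < x \<longrightarrow> x \<le> 1 \<longrightarrow>
     c * x powr ((2*p+2 * s-1)/(2*p+2*a)) \<le> Rstar (\<lambda>j. real j powr (2 * p)) (\<lambda>j. real j powr (-2 * a)) l x
   \<and> Rstar (\<lambda>j. real j powr (2 * p)) (\<lambda>j. real j powr (-2 * a)) l x \<le> C * x powr ((2*p+2 * s-1)/(2*p+2*a)))"
proof -
  define t where "t = 2*p+2 * s-1"
  define Q where "Q = 2*p+2*a"
  define r where "r = 2*a-2 * s"
  define B where "B = (\<lambda>j. real j powr (2 * p))"
  define G where "G = (\<lambda>j::nat. real j powr (-2 * a))"
  have tpos: "t > 0" and Qpos: "Q > 0" and rr: "r > -1" using t a p r by (auto simp: t_def Q_def r_def)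
  have QrT: "1 - (r+1)/Q = t/Q" using Qpos by (simp add: Q_def r_def t_def field_simps)
  define K1 where "K1 = max 1 (1/(r+1))"
  define k1 where "k1 = min 1 (1/(r+1))"
  define c where "c = min (2 powr (- (t+1))) k1"
  define C where "C = 1/t + K1 * 2 powr (r+1)"
  have cpos: "c > 0" using rr by (simp add: c_def k1_def)
  have Cpos: "C > 0" using tpos rr by (simp add: C_def K1_def add_pos_pos)
  have Bnn: "\<And>j. 0 \<le> B j" by (simp add: B_def)
  have tail: "\<And>m. 1 \<le> m \<Longrightarrow> (\<Sum>\<^sub>\<infinity>j\<in>{m<..}. (l j)\<^sup>2 / B j) \<le> real m powr (-t) / t"
    "\<And>m. 1 \<le> m \<Longrightarrow> (\<Sum>\<^sub>\<infinity>j\<in>{m<..}. (l j)\<^sup>2 / B j) \<ge> 2 powr (- (t+1)) * real m powr (-t)"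
    using pp_tail[OF hl _ t] by (auto simp: B_def t_def algebra_simps)
  have S: "\<And>m. (\<Sum>j=1..m. (l j)\<^sup>2 / G j) = (\<Sum>j=1..m. real j powr r)"
    using psum_terms[OF hl] by (simp add: G_def r_def)
  have Sb: "\<And>m. 1 \<le> m \<Longrightarrow> k1 * real m powr (r+1) \<le> (\<Sum>j=1..m. (l j)\<^sup>2 / G j)"
    "\<And>m. 1 \<le> m \<Longrightarrow> (\<Sum>j=1..m. (l j)\<^sup>2 / G j) \<le> K1 * real m powr (r+1)"
    unfolding S k1_def K1_def using psum_pos[OF rr] by auto
  have ratio: "\<And>m. 1 \<le> m \<Longrightarrow> G m / B m = real m powr (-Q)"
    unfolding G_def B_def Q_def by (rule pp_ratio)
  have main: "c * x powr (t/Q) \<le> Rstar B G l x \<and> Rstar B G l x \<le> C * x powr (t/Q)"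
    if x: "0 < x" "x \<le> 1" for x
  proof
    define y where "y = x powr (-1/Q)"
    have y1: "1 \<le> y" unfolding y_def using powr_ge1_neg[OF x, of "1/Q"] Qpos by simp
    have ypos: "y > 0" using y1 by simp
    have I1: "y powr (-t) = x powr (t/Q)" unfolding y_def by (simp add: powr_powr)
    have I2: "y powr (-Q) = x" unfolding y_def using Qpos x by (simp add: powr_powr)
    have I3: "x * y powr (r+1) = x powr (t/Q)"
    proof -
      have "x * y powr (r+1) = x * x powr (- (r+1)/Q)" unfolding y_def using x Qpos by (simp add: powr_powr) (rule arg_cong[where f="\<lambda>e. x powr e"], simp add: field_simps)
      also have "\<dots> = x powr 1 * x powr (- (r+1)/Q)" using x by simp
      also have "\<dots> = x powr (1 + - (r+1)/Q)" by (rule powr_add[symmetric])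
      also have "1 + - (r+1)/Q = 1 - (r+1)/Q" using Qpos by (simp add: field_simps)
      finally show ?thesis using QrT by simp
    qed
    show "Rstar B G l x \<le> C * x powr (t/Q)"
    proof -
      define m where "m = nat \<lceil>y\<rceil>"
      have m: "1 \<le> m" "y \<le> real m" "real m \<le> 2 * y" using ceil_bounds[OF y1] by (auto simp: m_def)
      have A: "(\<Sum>\<^sub>\<infinity>j\<in>{m<..}. (l j)\<^sup>2 / B j) \<le> x powr (t/Q) / t"
      proof -
        have "real m powr (-t) \<le> y powr (-t)" using m ypos tpos by (intro powr_mono2') auto
        thus ?thesis using tail(1)[OF m(1)] I1 tpos by (smt (verit) divide_right_mono)
      qed
      have mx: "G m / B m \<le> x"
      proof -
        have "real m powr (-Q) \<le> y powr (-Q)" using m ypos Qpos by (intro powr_mono2') auto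
        thus ?thesis using ratio[OF m(1)] I2 by simp
      qed
      have "max (G m / B m) x * (\<Sum>j=1..m. (l j)\<^sup>2 / G j) = x * (\<Sum>j=1..m. (l j)\<^sup>2 / G j)"
        using mx by simp
      also have "\<dots> \<le> x * (K1 * real m powr (r+1))" using Sb(2)[OF m(1)] x by simp
      also have "\<dots> \<le> x * (K1 * (2 * y) powr (r+1))"
        using m rr x by (intro mult_left_mono powr_mono2) (auto simp: K1_def)
      also have "\<dots> = K1 * 2 powr (r+1) * (x * y powr (r+1))" using ypos by (simp add: powr_mult)
      also have "\<dots> = K1 * 2 powr (r+1) * x powr (t/Q)" using I3 by simp
      finally have Bb: "max (G m / B m) x * (\<Sum>j=1..m. (l j)\<^sup>2 / G j) \<le> K1 * 2 powr (r+1) * x powr (t/Q)" .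
      have "Rstar B G l x \<le> Rm B G l m x" by (rule Rstar_le[OF Bnn m(1)])
      also have "\<dots> \<le> max (x powr (t/Q) / t) (K1 * 2 powr (r+1) * x powr (t/Q))" by (rule Rm_le[OF A Bb])
      also have "\<dots> \<le> C * x powr (t/Q)"
        using tpos rr x by (auto simp: C_def K1_def algebra_simps add_pos_pos)
      finally show ?thesis .
    qed
    show "c * x powr (t/Q) \<le> Rstar B G l x"
    proof (rule Rstar_ge)
      fix m :: nat assume m: "1 \<le> m"
      show "c * x powr (t/Q) \<le> Rm B G l m x"
      proof (cases "real m \<le> y")
        case True
        have "y powr (-t) \<le> real m powr (-t)" using m True tpos by (intro powr_mono2') auto
        hence "2 powr (- (t+1)) * x powr (t/Q) \<le> 2 powr (- (t+1)) * real m powr (-t)" using I1 by simp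
        moreover have "c * x powr (t/Q) \<le> 2 powr (- (t+1)) * x powr (t/Q)"
          by (intro mult_right_mono) (auto simp: c_def)
        ultimately show ?thesis using tail(2)[OF m] Rm_ge_tail[of l B m G x] by linarith
      next
        case False
        have "y powr (r+1) \<le> real m powr (r+1)" using False ypos rr by (intro powr_mono2) auto
        hence "k1 * (x * y powr (r+1)) \<le> x * (k1 * real m powr (r+1))"
        proof -
          assume h: "y powr (r+1) \<le> real m powr (r+1)"
          have k1nn: "0 \<le> k1" using rr by (simp add: k1_def)
          have "k1 * (x * y powr (r+1)) = x * (k1 * y powr (r+1))" by simp
          also have "\<dots> \<le> x * (k1 * real m powr (r+1))"
            using h x k1nn by (intro mult_left_mono) auto
          finally show ?thesis .
        qed
        also have "\<dots> \<le> x * (\<Sum>j=1..m. (l j)\<^sup>2 / G j)" using Sb(1)[OF m] x by simp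
        also have "\<dots> \<le> Rm B G l m x"
          by (rule Rm_ge_x(1)) (use Sb(1)[OF m] rr in \<open>smt (verit) k1_def powr_ge_zero zero_less_one min_def mult_nonneg_nonneg divide_nonneg_nonneg\<close>)
        finally have "k1 * x powr (t/Q) \<le> Rm B G l m x" using I3 by simp
        moreover have "c * x powr (t/Q) \<le> k1 * x powr (t/Q)"
          by (intro mult_right_mono) (auto simp: c_def)
        ultimately show ?thesis by linarith
      qed
    qed
  qed
  show ?thesis unfolding t_def[symmetric] Q_def[symmetric]
    using cpos Cpos main unfolding B_def G_def by blast
qed

lemma xL_le_sqrt:
  fixes x :: real assumes "0 < x"
  shows "x * (- ln x) / 2 \<le> x powr (1/2)"
proof -
  define L where "L = - ln x"
  have xp: "x powr (1/2) = exp (-L) * exp (L/2)"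
  proof -
    have "exp (-L) * exp (L/2) = exp (-L + L/2)" by (rule exp_add[symmetric])
    moreover have "-L + L/2 = 1/2 * ln x" by (simp add: L_def)
    moreover have "x powr (1/2) = exp (1/2 * ln x)" using assms by (simp add: powr_def)
    ultimately show ?thesis by simp
  qed
  have "L/2 \<le> exp (L/2)" using exp_ge_add_one_self[of "L/2"] by linarith
  hence "exp (-L) * (L/2) \<le> exp (-L) * exp (L/2)" by (intro mult_left_mono) auto
  moreover have "x * (- ln x) / 2 = exp (-L) * (L/2)" using assms by (simp add: L_def)
  ultimately show ?thesis using xp by simp
qed

lemma PP2:
  fixes p a s :: real
  assumes hl: "\<forall>j\<ge>1. (l j)\<^sup>2 = real j powr (-2 * s)"
    and p: "p > 0" and a: "a > 0" and r: "2*a-2 * s = -1"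
  shows "\<exists>c C. 0 < c \<and> 0 < C \<and> (\<forall>x. 0 < x \<longrightarrow> x \<le> exp (-1) \<longrightarrow>
     c * (x * (- ln x)) \<le> Rstar (\<lambda>j. real j powr (2 * p)) (\<lambda>j. real j powr (-2 * a)) l x
   \<and> Rstar (\<lambda>j. real j powr (2 * p)) (\<lambda>j. real j powr (-2 * a)) l x \<le> C * (x * (- ln x)))"
proof -
  define Q where "Q = 2*p+2*a"
  define B where "B = (\<lambda>j. real j powr (2 * p))"
  define G where "G = (\<lambda>j::nat. real j powr (-2 * a))"
  have Qpos: "Q > 0" using a p by (auto simp: Q_def)
  have t: "2*p+2 * s-1 > 0" and tQ: "2*p+2 * s-1 = Q" using p a r by (auto simp: Q_def)
  define c where "c = min (2 powr (- (Q+1)) / 2) (1/(2*Q))"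
  define C where "C = 2/Q + 2"
  have cpos: "c > 0" using Qpos by (simp add: c_def)
  have Cpos: "C > 0" using Qpos by (simp add: C_def add_pos_pos)
  have Bnn: "\<And>j. 0 \<le> B j" by (simp add: B_def)
  have tail: "\<And>m. 1 \<le> m \<Longrightarrow> (\<Sum>\<^sub>\<infinity>j\<in>{m<..}. (l j)\<^sup>2 / B j) \<le> real m powr (-Q) / Q"
    "\<And>m. 1 \<le> m \<Longrightarrow> (\<Sum>\<^sub>\<infinity>j\<in>{m<..}. (l j)\<^sup>2 / B j) \<ge> 2 powr (- (Q+1)) * real m powr (-Q)"
  proof -
    have eq2: "2*p+2 * s = Q+1" using tQ by simp
    show "\<And>m. 1 \<le> m \<Longrightarrow> (\<Sum>\<^sub>\<infinity>j\<in>{m<..}. (l j)\<^sup>2 / B j) \<le> real m powr (-Q) / Q"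
      "\<And>m. 1 \<le> m \<Longrightarrow> (\<Sum>\<^sub>\<infinity>j\<in>{m<..}. (l j)\<^sup>2 / B j) \<ge> 2 powr (- (Q+1)) * real m powr (-Q)"
      using pp_tail[OF hl _ t] unfolding eq2 by (auto simp: B_def)
  qed
  have S: "\<And>m. (\<Sum>j=1..m. (l j)\<^sup>2 / G j) = (\<Sum>j=1..m. real j powr (-1))"
    using psum_terms[OF hl] r by (simp add: G_def)
  have Sb: "\<And>m. 1 \<le> m \<Longrightarrow> ln (real m + 1) \<le> (\<Sum>j=1..m. (l j)\<^sup>2 / G j)"
    "\<And>m. 1 \<le> m \<Longrightarrow> (\<Sum>j=1..m. (l j)\<^sup>2 / G j) \<le> 1 + ln (real m)"
    unfolding S using psum_harm by auto
  have ratio: "\<And>m. 1 \<le> m \<Longrightarrow> G m / B m = real m powr (-Q)"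
    unfolding G_def B_def Q_def by (rule pp_ratio)
  have main: "c * (x * (- ln x)) \<le> Rstar B G l x \<and> Rstar B G l x \<le> C * (x * (- ln x))"
    if x: "0 < x" "x \<le> exp (-1)" for x
  proof
    define L where "L = - ln x"
    have L1: "1 \<le> L" using ln_le_cancel_iff[of x "exp (-1)"] x by (simp add: L_def)
    have x1: "x \<le> 1" using x by (smt (verit) exp_le_one_iff)
    define y where "y = x powr (-1/Q)"
    have y1: "1 \<le> y" unfolding y_def using powr_ge1_neg[OF x(1) x1, of "1/Q"] Qpos by simp
    have ypos: "y > 0" using y1 by simp
    have I2: "y powr (-Q) = x" unfolding y_def using Qpos x by (simp add: powr_powr)
    have lny: "ln y = L / Q" unfolding y_def L_def using x by (simp add: ln_powr)
    show "Rstar B G l x \<le> C * (x * (- ln x))"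
    proof -
      define m where "m = nat \<lceil>y\<rceil>"
      have m: "1 \<le> m" "y \<le> real m" "real m \<le> 2 * y" using ceil_bounds[OF y1] by (auto simp: m_def)
      have mQ: "real m powr (-Q) \<le> x"
      proof -
        have "real m powr (-Q) \<le> y powr (-Q)" using m ypos Qpos by (intro powr_mono2') auto
        thus ?thesis using I2 by simp
      qed
      have A: "(\<Sum>\<^sub>\<infinity>j\<in>{m<..}. (l j)\<^sup>2 / B j) \<le> x / Q"
        using tail(1)[OF m(1)] mQ Qpos by (smt (verit) divide_right_mono)
      have lnm: "ln (real m) \<le> ln 2 + L / Q"
      proof -
        have "ln (real m) \<le> ln (2 * y)" using m ypos by simp
        also have "\<dots> = ln 2 + L/Q" using ypos lny by (simp add: ln_mult)
        finally show ?thesis .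
      qed
      have "max (G m / B m) x * (\<Sum>j=1..m. (l j)\<^sup>2 / G j) = x * (\<Sum>j=1..m. (l j)\<^sup>2 / G j)"
        using mQ ratio[OF m(1)] by simp
      also have "\<dots> \<le> x * (1 + ln 2 + L / Q)" using Sb(2)[OF m(1)] x lnm
        by (smt (verit) mult_left_mono)
      also have "\<dots> \<le> x * (L * (2 + 1/Q))"
      proof -
        have "ln (2::real) \<le> 1" using ln_le_minus_one[of 2] by simp
        hence "1 + ln 2 + L / Q \<le> L * (2 + 1/Q)" using L1 Qpos by (simp add: algebra_simps)
        thus ?thesis using x by (intro mult_left_mono) auto
      qed
      finally have Bb: "max (G m / B m) x * (\<Sum>j=1..m. (l j)\<^sup>2 / G j) \<le> x * (L * (2 + 1/Q))" .
      have "Rstar B G l x \<le> Rm B G l m x" by (rule Rstar_le[OF Bnn m(1)])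
      also have "\<dots> \<le> max (x / Q) (x * (L * (2 + 1/Q)))" by (rule Rm_le[OF A Bb])
      also have "\<dots> \<le> C * (x * L)"
      proof -
        have "x / Q \<le> x * L / Q" using x L1 Qpos by (simp add: divide_right_mono)
        moreover have "x * L / Q \<le> C * (x * L)" using x L1 Qpos by (simp add: C_def field_simps)
        moreover have "x * (L * (2 + 1/Q)) \<le> C * (x * L)" using x L1 Qpos by (simp add: C_def field_simps)
        ultimately show ?thesis by linarith
      qed
      finally show ?thesis by (simp add: L_def)
    qed
    show "c * (x * (- ln x)) \<le> Rstar B G l x"
    proof (rule Rstar_ge)
      fix m :: nat assume m: "1 \<le> m"
      define z where "z = x powr (-1/(2*Q))"
      have zpos: "z > 0" using x by (simp add: z_def)
      have Iz: "z powr (-Q) = x powr (1/2)" unfolding z_def using Qpos x by (simp add: powr_powr)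
      have lnz: "ln z = L / (2*Q)" unfolding z_def L_def using x by (simp add: ln_powr)
      show "c * (x * (- ln x)) \<le> Rm B G l m x"
      proof (cases "real m \<le> z")
        case True
        have "z powr (-Q) \<le> real m powr (-Q)" using m True Qpos zpos by (intro powr_mono2') auto
        hence "2 powr (- (Q+1)) * x powr (1/2) \<le> 2 powr (- (Q+1)) * real m powr (-Q)" using Iz by simp
        moreover have "c * (x * (- ln x)) \<le> 2 powr (- (Q+1)) * x powr (1/2)"
        proof -
          have "c * (x * (- ln x)) \<le> (2 powr (- (Q+1)) / 2) * (x * (- ln x))"
            using x L1 x1 unfolding L_def by (intro mult_right_mono mult_nonneg_nonneg) (auto simp: c_def)
          also have "\<dots> = 2 powr (- (Q+1)) * (x * (- ln x) / 2)" by simp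
          also have "\<dots> \<le> 2 powr (- (Q+1)) * x powr (1/2)"
            using xL_le_sqrt[OF x(1)] by (intro mult_left_mono) auto
          finally show ?thesis .
        qed
        ultimately show ?thesis using tail(2)[OF m] Rm_ge_tail[of l B m G x] by linarith
      next
        case False
        have "ln z \<le> ln (real m)" using False zpos by simp
        also have "\<dots> \<le> ln (real m + 1)" using m by simp
        also have "\<dots> \<le> (\<Sum>j=1..m. (l j)\<^sup>2 / G j)" by (rule Sb(1)[OF m])
        finally have "L / (2*Q) \<le> (\<Sum>j=1..m. (l j)\<^sup>2 / G j)" using lnz by simp
        hence "x * (L / (2*Q)) \<le> x * (\<Sum>j=1..m. (l j)\<^sup>2 / G j)" using x by (intro mult_left_mono) auto
        also have "\<dots> \<le> Rm B G l m x"
          by (rule Rm_ge_x(1)) (use \<open>L / (2*Q) \<le> _\<close> L1 Qpos in \<open>smt (verit) divide_nonneg_nonneg\<close>)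
        finally have "(1/(2*Q)) * (x * L) \<le> Rm B G l m x" by simp
        moreover have "c * (x * L) \<le> (1/(2*Q)) * (x * L)"
          using x L1 by (intro mult_right_mono) (auto simp: c_def)
        ultimately show ?thesis by (simp add: L_def)
      qed
    qed
  qed
  show ?thesis using cpos Cpos main unfolding B_def G_def by blast
qed

lemma PP3:
  fixes p a s :: real
  assumes hl: "\<forall>j\<ge>1. (l j)\<^sup>2 = real j powr (-2 * s)"
    and p: "p > 0" and a: "a > 0" and r: "2*a-2 * s < -1"
  shows "\<exists>c C. 0 < c \<and> 0 < C \<and> (\<forall>x. 0 < x \<longrightarrow> x \<le> 1 \<longrightarrow>
     c * x \<le> Rstar (\<lambda>j. real j powr (2 * p)) (\<lambda>j. real j powr (-2 * a)) l x
   \<and> Rstar (\<lambda>j. real j powr (2 * p)) (\<lambda>j. real j powr (-2 * a)) l x \<le> C * x)"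
proof -
  define Q where "Q = 2*p+2*a"
  define t where "t = 2*p+2 * s-1"
  define r' where "r' = 2*a-2 * s"
  define B where "B = (\<lambda>j. real j powr (2 * p))"
  define G where "G = (\<lambda>j::nat. real j powr (-2 * a))"
  have Qpos: "Q > 0" using a p by (auto simp: Q_def)
  have tQ: "t > Q" using r by (auto simp: Q_def t_def)
  have t: "2*p+2 * s-1 > 0" using tQ Qpos t_def by simp
  define C where "C = 1/t + 1 + 1/(-r'-1)"
  have Cpos: "C > 0" using Qpos tQ r by (simp add: C_def r'_def add_pos_pos)
  have Bnn: "\<And>j. 0 \<le> B j" by (simp add: B_def)
  have tail: "\<And>m. 1 \<le> m \<Longrightarrow> (\<Sum>\<^sub>\<infinity>j\<in>{m<..}. (l j)\<^sup>2 / B j) \<le> real m powr (-t) / t"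
    using pp_tail(1)[OF hl _ t] by (auto simp: B_def t_def algebra_simps)
  have S: "\<And>m. (\<Sum>j=1..m. (l j)\<^sup>2 / G j) = (\<Sum>j=1..m. real j powr r')"
    using psum_terms[OF hl] by (simp add: G_def r'_def)
  have Sb: "\<And>m. 1 \<le> m \<Longrightarrow> 1 \<le> (\<Sum>j=1..m. (l j)\<^sup>2 / G j)"
    "\<And>m. 1 \<le> m \<Longrightarrow> (\<Sum>j=1..m. (l j)\<^sup>2 / G j) \<le> 1 + 1/(-r'-1)"
    unfolding S using psum_neg[of r'] r by (auto simp: r'_def)
  have ratio: "\<And>m. 1 \<le> m \<Longrightarrow> G m / B m = real m powr (-Q)"
    unfolding G_def B_def Q_def by (rule pp_ratio)
  have main: "1 * x \<le> Rstar B G l x \<and> Rstar B G l x \<le> C * x"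
    if x: "0 < x" "x \<le> 1" for x
  proof
    define y where "y = x powr (-1/Q)"
    have y1: "1 \<le> y" unfolding y_def using powr_ge1_neg[OF x, of "1/Q"] Qpos by simp
    have ypos: "y > 0" using y1 by simp
    have I2: "y powr (-Q) = x" unfolding y_def using Qpos x by (simp add: powr_powr)
    show "Rstar B G l x \<le> C * x"
    proof -
      define m where "m = nat \<lceil>y\<rceil>"
      have m: "1 \<le> m" "y \<le> real m" "real m \<le> 2 * y" using ceil_bounds[OF y1] by (auto simp: m_def)
      have mQ: "real m powr (-Q) \<le> x"
      proof -
        have "real m powr (-Q) \<le> y powr (-Q)" using m ypos Qpos by (intro powr_mono2') auto
        thus ?thesis using I2 by simp
      qed
      have mt: "real m powr (-t) \<le> x"
      proof -
        have "real m powr (-t) \<le> real m powr (-Q)" using m tQ by (intro powr_mono) auto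
        thus ?thesis using mQ by simp
      qed
      have A: "(\<Sum>\<^sub>\<infinity>j\<in>{m<..}. (l j)\<^sup>2 / B j) \<le> x / t"
        using tail[OF m(1)] mt tQ Qpos by (smt (verit) divide_right_mono)
      have "max (G m / B m) x * (\<Sum>j=1..m. (l j)\<^sup>2 / G j) = x * (\<Sum>j=1..m. (l j)\<^sup>2 / G j)"
        using mQ ratio[OF m(1)] by simp
      also have "\<dots> \<le> x * (1 + 1/(-r'-1))" using Sb(2)[OF m(1)] x by (intro mult_left_mono) auto
      finally have Bb: "max (G m / B m) x * (\<Sum>j=1..m. (l j)\<^sup>2 / G j) \<le> x * (1 + 1/(-r'-1))" .
      have "Rstar B G l x \<le> Rm B G l m x" by (rule Rstar_le[OF Bnn m(1)])
      also have "\<dots> \<le> max (x / t) (x * (1 + 1/(-r'-1)))" by (rule Rm_le[OF A Bb])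
      also have "\<dots> \<le> C * x"
      proof -
        have "0 \<le> x / t" using x tQ Qpos by simp
        moreover have "0 \<le> x * (1 + 1/(-r'-1))" using x r by (simp add: r'_def)
        moreover have "C * x = x / t + x * (1 + 1/(-r'-1))" by (simp add: C_def algebra_simps)
        ultimately show ?thesis by linarith
      qed
      finally show ?thesis .
    qed
    show "1 * x \<le> Rstar B G l x"
    proof (rule Rstar_ge)
      fix m :: nat assume m: "1 \<le> m"
      have "x * 1 \<le> x * (\<Sum>j=1..m. (l j)\<^sup>2 / G j)" using Sb(1)[OF m] x by (intro mult_left_mono) auto
      also have "\<dots> \<le> Rm B G l m x" by (rule Rm_ge_x(1)) (use Sb(1)[OF m] in auto)
      finally show "1 * x \<le> Rm B G l m x" by simp
    qed
  qed
  show ?thesis using Cpos main unfolding B_def G_def by (intro exI[of _ 1] exI[of _ C]) auto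
qed

lemma poly_exp:
  fixes k \<alpha> \<theta> :: real assumes "0 < \<alpha>" "0 < \<theta>"
  shows "\<exists>K>0. \<forall>u\<ge>1. u powr k \<le> K * exp (\<theta> * u powr \<alpha>)"
proof (cases "k \<le> 0")
  case True
  show ?thesis
  proof (intro exI[of _ 1] conjI allI impI)
    fix u :: real assume u: "1 \<le> u"
    have "u powr k \<le> u powr 0" using u True by (intro powr_mono) auto
    also have "\<dots> \<le> exp (\<theta> * u powr \<alpha>)" using u assms by simp
    finally show "u powr k \<le> 1 * exp (\<theta> * u powr \<alpha>)" by simp
  qed simp
next
  case False
  define \<kappa> where "\<kappa> = k / \<alpha>"
  have kp: "\<kappa> > 0" using False assms by (simp add: \<kappa>_def)
  show ?thesis
  proof (intro exI[of _ "\<kappa> powr \<kappa> / \<theta> powr \<kappa>"] conjI allI impI)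
    show "\<kappa> powr \<kappa> / \<theta> powr \<kappa> > 0" using kp assms by simp
    fix u :: real assume u: "1 \<le> u"
    have "(\<theta> * u powr \<alpha>) powr \<kappa> \<le> \<kappa> powr \<kappa> * exp (\<theta> * u powr \<alpha>)"
      using assms u kp by (intro exp_poly_bound) auto
    moreover have "(\<theta> * u powr \<alpha>) powr \<kappa> = \<theta> powr \<kappa> * u powr k"
      using assms u by (simp add: powr_mult powr_powr \<kappa>_def)
    ultimately have "\<theta> powr \<kappa> * u powr k \<le> \<kappa> powr \<kappa> * exp (\<theta> * u powr \<alpha>)" by simp
    thus "u powr k \<le> \<kappa> powr \<kappa> / \<theta> powr \<kappa> * exp (\<theta> * u powr \<alpha>)"
      using assms by (simp add: field_simps)
  qed
qed

lemma term_compare: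
  fixes s \<alpha> :: real assumes "0 < \<alpha>"
  shows "\<exists>K>0. \<forall>j m. 1 \<le> j \<longrightarrow> j \<le> m \<longrightarrow>
     real j powr (-2 * s) * exp (real j powr \<alpha>) \<le> K * (real m powr (-2 * s) * exp (real m powr \<alpha>))"
proof -
  obtain K0 where K0: "K0 > 0" "\<And>u. 1 \<le> u \<Longrightarrow> u powr (2 * s) \<le> K0 * exp (1 * u powr \<alpha>)"
    using poly_exp[OF assms, of 1 "2 * s"] by auto
  show ?thesis
  proof (intro exI[of _ "K0 * exp 1"] conjI allI impI)
    show "K0 * exp 1 > 0" using K0 by simp
    fix j m :: nat assume jm: "1 \<le> j" "j \<le> m"
    define u where "u = real m / real j"
    have u1: "1 \<le> u" using jm by (simp add: u_def)
    have jpos: "real j > 0" using jm by simp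
    have mj: "real m = u * real j" using jpos by (simp add: u_def)
    have ja: "1 \<le> real j powr \<alpha>" using jm assms by (intro ge_one_powr_ge_zero) auto
    have ua: "1 \<le> u powr \<alpha>" using u1 assms by (intro ge_one_powr_ge_zero) auto
    have ma: "real m powr \<alpha> = u powr \<alpha> * real j powr \<alpha>" using mj u1 jpos by (simp add: powr_mult)
    have diff: "u powr \<alpha> - 1 \<le> real m powr \<alpha> - real j powr \<alpha>"
    proof -
      have "0 \<le> (u powr \<alpha> - 1) * (real j powr \<alpha> - 1)" using ja ua by simp
      thus ?thesis unfolding ma by (simp add: algebra_simps)
    qed
    have "u powr (2 * s) \<le> K0 * exp (u powr \<alpha>)" using K0(2)[OF u1] by simp
    also have "\<dots> \<le> K0 * exp (1 + (real m powr \<alpha> - real j powr \<alpha>))"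
      using diff K0 by (intro mult_left_mono) auto
    also have "\<dots> = K0 * exp 1 * exp (real m powr \<alpha>) / exp (real j powr \<alpha>)"
      by (simp add: exp_add exp_diff)
    finally have uu: "u powr (2 * s) * exp (real j powr \<alpha>) \<le> K0 * exp 1 * exp (real m powr \<alpha>)"
      by (simp add: field_simps)
    have jr: "real j powr (-2 * s) = u powr (2 * s) * real m powr (-2 * s)"
      using mj u1 jpos by (simp add: powr_mult powr_minus field_simps)
    have "real j powr (-2 * s) * exp (real j powr \<alpha>) = real m powr (-2 * s) * (u powr (2 * s) * exp (real j powr \<alpha>))"
      using jr by simp
    also have "\<dots> \<le> real m powr (-2 * s) * (K0 * exp 1 * exp (real m powr \<alpha>))"
      using uu by (intro mult_left_mono) auto
    finally show "real j powr (-2 * s) * exp (real j powr \<alpha>) \<le> K0 * exp 1 * (real m powr (-2 * s) * exp (real m powr \<alpha>))"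
      by (simp add: mult_ac)
  qed
qed

lemma PE:
  fixes p a s :: real
  assumes hl: "\<forall>j\<ge>1. (l j)\<^sup>2 = real j powr (-2 * s)"
    and p: "p > 0" and a: "a > 0" and t: "2*p+2 * s-1 > 0"
  shows "\<exists>c C x0. 0 < c \<and> 0 < C \<and> 0 < x0 \<and> (\<forall>x. 0 < x \<longrightarrow> x \<le> x0 \<longrightarrow>
     c * (- ln x) powr (- (2*p+2 * s-1)/(2*a)) \<le> Rstar (\<lambda>j. real j powr (2 * p)) (\<lambda>j. exp (- (real j powr (2 * a)) + 1)) l x
   \<and> Rstar (\<lambda>j. real j powr (2 * p)) (\<lambda>j. exp (- (real j powr (2 * a)) + 1)) l x \<le> C * (- ln x) powr (- (2*p+2 * s-1)/(2*a)))"
proof -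
  define t where "t = 2*p+2 * s-1"
  define \<alpha> where "\<alpha> = 2*a"
  define B where "B = (\<lambda>j. real j powr (2 * p))"
  define G where "G = (\<lambda>j::nat. exp (- (real j powr (2 * a)) + 1))"
  have tpos: "t > 0" and apos: "\<alpha> > 0" using t a by (auto simp: t_def \<alpha>_def)
  obtain K where K: "K > 0" "\<And>j m. 1 \<le> j \<Longrightarrow> j \<le> m \<Longrightarrow>
     real j powr (-2 * s) * exp (real j powr \<alpha>) \<le> K * (real m powr (-2 * s) * exp (real m powr \<alpha>))"
    using term_compare[OF apos, of s] by blast
  obtain K2 where K2: "K2 > 0" "\<And>u. 1 \<le> u \<Longrightarrow> u powr (2 * s) \<le> K2 * exp (1/2 * u powr \<alpha>)"
    using poly_exp[OF apos, of "1/2" "2 * s"] by auto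
  obtain K3 where K3: "K3 > 0" "\<And>u. 1 \<le> u \<Longrightarrow> u powr (2 * p) \<le> K3 * exp (1 * u powr \<alpha>)"
    using poly_exp[OF apos, of 1 "2 * p"] by auto
  define c where "c = min (2 powr (- (t+1)) * 2 powr (-t/\<alpha>)) (1 / (exp 1 * K2))"
  define C0 where "C0 = 1/t + exp 1 * K + K * K3"
  define C where "C = C0 * (2 powr t * 2 powr (t/\<alpha>))"
  define x0 where "x0 = exp (- (2 * 2 powr \<alpha>))"
  have cpos: "c > 0" using K2 by (simp add: c_def)
  have C0pos: "C0 > 0" using tpos K K3 by (simp add: C0_def add_pos_pos)
  have Cpos: "C > 0" using C0pos by (simp add: C_def)
  have x0pos: "x0 > 0" by (simp add: x0_def)
  have Bnn: "\<And>j. 0 \<le> B j" by (simp add: B_def)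
  have tail: "\<And>m. 1 \<le> m \<Longrightarrow> (\<Sum>\<^sub>\<infinity>j\<in>{m<..}. (l j)\<^sup>2 / B j) \<le> real m powr (-t) / t"
    "\<And>m. 1 \<le> m \<Longrightarrow> (\<Sum>\<^sub>\<infinity>j\<in>{m<..}. (l j)\<^sup>2 / B j) \<ge> 2 powr (- (t+1)) * real m powr (-t)"
    using pp_tail[OF hl _ t] by (auto simp: B_def t_def algebra_simps)
  have trm: "\<And>j. 1 \<le> j \<Longrightarrow> (l j)\<^sup>2 / G j = real j powr (-2 * s) * exp (real j powr \<alpha>) / exp 1"
  proof -
    fix j :: nat assume j: "1 \<le> j"
    have "G j = exp (1 - real j powr \<alpha>)" by (simp add: G_def \<alpha>_def)
    also have "\<dots> = exp 1 / exp (real j powr \<alpha>)" by (rule exp_diff)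
    finally show "(l j)\<^sup>2 / G j = real j powr (-2 * s) * exp (real j powr \<alpha>) / exp 1"
      using hl j by simp
  qed
  have Snn: "\<And>m. 0 \<le> (\<Sum>j=1..m. (l j)\<^sup>2 / G j)" by (intro sum_nonneg) (simp add: G_def)
  have Sup: "(\<Sum>j=1..m. (l j)\<^sup>2 / G j) \<le> K * real m powr (1 - 2 * s) * exp (real m powr \<alpha>)"
    if m: "1 \<le> m" for m
  proof -
    have "(\<Sum>j=1..m. (l j)\<^sup>2 / G j) \<le> (\<Sum>j=1..m. K * (real m powr (-2 * s) * exp (real m powr \<alpha>)))"
    proof (rule sum_mono)
      fix j assume j: "j \<in> {1..m}"
      have "(l j)\<^sup>2 / G j = real j powr (-2 * s) * exp (real j powr \<alpha>) / exp 1" using trm j by auto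
      also have "\<dots> \<le> real j powr (-2 * s) * exp (real j powr \<alpha>)"
      proof -
        have "0 \<le> real j powr (-2 * s) * exp (real j powr \<alpha>)" by simp
        thus ?thesis by (simp add: divide_le_eq mult_le_cancel_left1 not_less)
      qed
      also have "\<dots> \<le> K * (real m powr (-2 * s) * exp (real m powr \<alpha>))" using K(2)[of j m] j by auto
      finally show "(l j)\<^sup>2 / G j \<le> K * (real m powr (-2 * s) * exp (real m powr \<alpha>))" .
    qed
    also have "\<dots> = K * (real m * real m powr (-2 * s)) * exp (real m powr \<alpha>)" by simp
    also have "real m * real m powr (-2 * s) = real m powr (1 - 2 * s)"
      using m by (simp add: powr_diff powr_minus field_simps)
    finally show ?thesis .
  qed
  have ratio: "\<And>m. G m / B m = exp 1 * exp (- (real m powr \<alpha>)) / real m powr (2*p)"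
  proof -
    fix m :: nat
    have "exp 1 * exp (- (real m powr \<alpha>)) = exp (1 + - (real m powr \<alpha>))" by (rule mult_exp_exp)
    also have "1 + - (real m powr \<alpha>) = - (real m powr (2*a)) + 1" by (simp add: \<alpha>_def)
    finally show "G m / B m = exp 1 * exp (- (real m powr \<alpha>)) / real m powr (2*p)" by (simp add: G_def B_def)
  qed
  have main: "c * (- ln x) powr (-t/\<alpha>) \<le> Rstar B G l x \<and> Rstar B G l x \<le> C * (- ln x) powr (-t/\<alpha>)"
    if x: "0 < x" "x \<le> x0" for x
  proof
    define L where "L = - ln x"
    have xL: "x = exp (-L)" using x by (simp add: L_def)
    have LL: "2 * 2 powr \<alpha> \<le> L" using ln_le_cancel_iff[of x x0] x x0pos by (simp add: L_def x0_def)
    have "1 \<le> (2::real) powr \<alpha>" using apos by (intro ge_one_powr_ge_zero) auto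
    hence L1: "1 \<le> L" using LL by linarith
    have Lpos: "L > 0" using L1 by simp
    have Lt: "L powr (-t/\<alpha>) \<le> 1"
    proof -
      have "L powr (-t/\<alpha>) \<le> L powr 0" using L1 tpos apos by (intro powr_mono) auto
      thus ?thesis using Lpos by simp
    qed
    show "Rstar B G l x \<le> C * (- ln x) powr (-t/\<alpha>)"
    proof -
      define w where "w = (L/2) powr (1/\<alpha>)"
      have w2: "2 \<le> w"
      proof -
        have "(2 powr \<alpha>) powr (1/\<alpha>) \<le> (L/2) powr (1/\<alpha>)" using LL apos by (intro powr_mono2) auto
        thus ?thesis using apos by (simp add: w_def powr_powr)
      qed
      have wa: "w powr \<alpha> = L/2" using apos Lpos by (simp add: w_def powr_powr)
      define m where "m = nat \<lfloor>w\<rfloor>"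
      have m: "1 \<le> m" "real m \<le> w" "w / 2 \<le> real m" using w2 unfolding m_def by linarith+
      have mpos: "real m > 0" using m by simp
      have ma: "real m powr \<alpha> \<le> L/2" using m apos mpos wa by (metis powr_mono2 less_imp_le)
      have mt: "real m powr (-t) \<le> (2 powr t * 2 powr (t/\<alpha>)) * L powr (-t/\<alpha>)"
      proof -
        have "real m powr (-t) \<le> (w/2) powr (-t)" using m w2 tpos by (intro powr_mono2') auto
        also have "(w/2) powr (-t) = 2 powr t * w powr (-t)" using w2 by (simp add: powr_divide powr_minus field_simps)
        also have "w powr (-t) = (L/2) powr (-t/\<alpha>)" using Lpos apos by (simp add: w_def powr_powr)
        also have "(L/2) powr (-t/\<alpha>) = 2 powr (t/\<alpha>) * L powr (-t/\<alpha>)"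
          using Lpos by (simp add: powr_divide powr_minus field_simps)
        finally show ?thesis by (simp add: mult_ac)
      qed
      have A: "(\<Sum>\<^sub>\<infinity>j\<in>{m<..}. (l j)\<^sup>2 / B j) \<le> real m powr (-t) / t" by (rule tail(1)[OF m(1)])
      have S1: "(G m / B m) * (\<Sum>j=1..m. (l j)\<^sup>2 / G j) \<le> exp 1 * K * real m powr (-t)"
      proof -
        have "(G m / B m) * (\<Sum>j=1..m. (l j)\<^sup>2 / G j)
            \<le> (exp 1 * exp (- (real m powr \<alpha>)) / real m powr (2*p)) * (K * real m powr (1 - 2 * s) * exp (real m powr \<alpha>))"
          unfolding ratio using Sup[OF m(1)] by (intro mult_left_mono) auto
        also have "\<dots> = exp 1 * K * (real m powr (1 - 2 * s) / real m powr (2*p))"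
          by (simp add: exp_minus field_simps)
        also have "real m powr (1 - 2 * s) / real m powr (2*p) = real m powr (-t)"
        proof -
          have "real m powr (1 - 2 * s) / real m powr (2*p) = real m powr (1 - 2 * s - 2*p)" by (simp add: powr_diff)
          also have "\<dots> = real m powr (-t)" by (rule arg_cong[where f="\<lambda>e. real m powr e"]) (simp add: t_def)
          finally show ?thesis .
        qed
        finally show ?thesis .
      qed
      have S2: "x * (\<Sum>j=1..m. (l j)\<^sup>2 / G j) \<le> K * K3 * real m powr (-t)"
      proof -
        have "x * (\<Sum>j=1..m. (l j)\<^sup>2 / G j) \<le> x * (K * real m powr (1 - 2 * s) * exp (real m powr \<alpha>))"
          using Sup[OF m(1)] x by (intro mult_left_mono) auto
        also have "\<dots> \<le> x * (K * real m powr (1 - 2 * s) * exp (L/2))"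
          using ma x K by (intro mult_left_mono) auto
        also have "\<dots> = K * real m powr (1 - 2 * s) * exp (-L/2)"
          by (subst xL) (simp add: exp_add[symmetric] algebra_simps)
        also have "\<dots> \<le> K * real m powr (1 - 2 * s) * (K3 * real m powr (-2*p))"
        proof -
          have "real m powr (2*p) \<le> K3 * exp (real m powr \<alpha>)" using K3(2)[of "real m"] m by auto
          also have "\<dots> \<le> K3 * exp (L/2)" using ma K3 by (intro mult_left_mono) auto
          finally have "real m powr (2*p) \<le> K3 * exp (L/2)" .
          hence "exp (-L/2) \<le> K3 * real m powr (-2*p)"
            using mpos by (simp add: powr_minus exp_minus field_simps)
          thus ?thesis using K by (intro mult_left_mono) auto
        qed
        also have "\<dots> = K * K3 * (real m powr (1 - 2 * s) * real m powr (-2*p))" by simp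
        also have "real m powr (1 - 2 * s) * real m powr (-2*p) = real m powr (-t)"
        proof -
          have "real m powr (1 - 2 * s) * real m powr (-2*p) = real m powr (1 - 2 * s + -2*p)" by (rule powr_add[symmetric])
          also have "\<dots> = real m powr (-t)" by (rule arg_cong[where f="\<lambda>e. real m powr e"]) (simp add: t_def)
          finally show ?thesis .
        qed
        finally show ?thesis by simp
      qed
      have Bb: "max (G m / B m) x * (\<Sum>j=1..m. (l j)\<^sup>2 / G j) \<le> (exp 1 * K + K * K3) * real m powr (-t)"
      proof -
        have "max (G m / B m) x \<le> G m / B m + x" using x by (simp add: G_def B_def)
        hence "max (G m / B m) x * (\<Sum>j=1..m. (l j)\<^sup>2 / G j) \<le> (G m / B m + x) * (\<Sum>j=1..m. (l j)\<^sup>2 / G j)"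
          using Snn by (intro mult_right_mono) auto
        thus ?thesis using S1 S2 by (simp add: algebra_simps)
      qed
      have "Rstar B G l x \<le> Rm B G l m x" by (rule Rstar_le[OF Bnn m(1)])
      also have "\<dots> \<le> max (real m powr (-t) / t) ((exp 1 * K + K * K3) * real m powr (-t))" by (rule Rm_le[OF A Bb])
      also have "\<dots> \<le> C0 * real m powr (-t)"
      proof -
        have "real m powr (-t) / t \<le> C0 * real m powr (-t)"
          using tpos K K3 by (simp add: C0_def field_simps)
        moreover have "(exp 1 * K + K * K3) * real m powr (-t) \<le> C0 * real m powr (-t)"
          using tpos by (intro mult_right_mono) (auto simp: C0_def)
        ultimately show ?thesis by simp
      qed
      also have "\<dots> \<le> C0 * ((2 powr t * 2 powr (t/\<alpha>)) * L powr (-t/\<alpha>))"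
        using mt C0pos by (intro mult_left_mono) auto
      finally show ?thesis by (simp add: C_def L_def mult_ac)
    qed
    show "c * (- ln x) powr (-t/\<alpha>) \<le> Rstar B G l x"
    proof (rule Rstar_ge)
      fix m :: nat assume m: "1 \<le> m"
      have mpos: "real m > 0" using m by simp
      show "c * (- ln x) powr (-t/\<alpha>) \<le> Rm B G l m x"
      proof (cases "real m powr \<alpha> \<le> 2 * L")
        case True
        have "real m = (real m powr \<alpha>) powr (1/\<alpha>)" using apos mpos by (simp add: powr_powr)
        also have "\<dots> \<le> (2 * L) powr (1/\<alpha>)" using True apos by (intro powr_mono2) auto
        finally have m2L: "real m \<le> (2 * L) powr (1/\<alpha>)" .
        have "((2 * L) powr (1/\<alpha>)) powr (-t) \<le> real m powr (-t)" using m2L mpos tpos by (intro powr_mono2') auto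
        moreover have "((2 * L) powr (1/\<alpha>)) powr (-t) = 2 powr (-t/\<alpha>) * L powr (-t/\<alpha>)"
          using Lpos by (simp add: powr_powr powr_mult)
        ultimately have h1: "2 powr (-t/\<alpha>) * L powr (-t/\<alpha>) \<le> real m powr (-t)" by simp
        have "2 powr (- (t+1)) * (2 powr (-t/\<alpha>) * L powr (-t/\<alpha>)) \<le> 2 powr (- (t+1)) * real m powr (-t)"
          by (rule mult_left_mono[OF h1]) simp
        moreover have "c * L powr (-t/\<alpha>) \<le> 2 powr (- (t+1)) * (2 powr (-t/\<alpha>) * L powr (-t/\<alpha>))"
          using mult_right_mono[of c "2 powr (- (t+1)) * 2 powr (-t/\<alpha>)" "L powr (-t/\<alpha>)"]
          by (simp add: c_def mult_ac)
        ultimately show ?thesis using tail(2)[OF m] Rm_ge_tail[of l B m G x] unfolding L_def by linarith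
      next
        case False
        have "(l m)\<^sup>2 / G m \<le> (\<Sum>j=1..m. (l j)\<^sup>2 / G j)"
          using m by (intro member_le_sum) (auto simp: G_def)
        hence "x * ((l m)\<^sup>2 / G m) \<le> x * (\<Sum>j=1..m. (l j)\<^sup>2 / G j)" using x by (intro mult_left_mono) auto
        also have "\<dots> \<le> Rm B G l m x" by (rule Rm_ge_x(1)[OF Snn])
        finally have R1: "x * ((l m)\<^sup>2 / G m) \<le> Rm B G l m x" .
        have "real m powr (2 * s) \<le> K2 * exp (1/2 * real m powr \<alpha>)" using K2(2)[of "real m"] m by auto
        hence e1: "1 / K2 \<le> real m powr (-2 * s) * exp (1/2 * real m powr \<alpha>)"
          using K2 mpos by (simp add: powr_minus field_simps)
        have "exp (1/2 * real m powr \<alpha>) \<le> x * exp (real m powr \<alpha>)"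
          using False by (subst xL) (simp add: exp_add[symmetric])
        hence "real m powr (-2 * s) * exp (1/2 * real m powr \<alpha>) \<le> real m powr (-2 * s) * (x * exp (real m powr \<alpha>))"
          by (intro mult_left_mono) auto
        with e1 have "1 / K2 \<le> x * (real m powr (-2 * s) * exp (real m powr \<alpha>))" by (simp add: mult_ac)
        hence "1 / (exp 1 * K2) \<le> x * ((l m)\<^sup>2 / G m)"
        proof -
          assume h: "1 / K2 \<le> x * (real m powr (-2 * s) * exp (real m powr \<alpha>))"
          have eqv: "x * ((l m)\<^sup>2 / G m) = (x * (real m powr (-2 * s) * exp (real m powr \<alpha>))) / exp 1"
            using trm[OF m] by simp
          have "(1 / K2) / exp 1 \<le> (x * (real m powr (-2 * s) * exp (real m powr \<alpha>))) / exp 1"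
            by (rule divide_right_mono[OF h]) simp
          thus ?thesis using eqv by (simp add: mult.commute)
        qed
        moreover have "c * L powr (-t/\<alpha>) \<le> 1 / (exp 1 * K2)"
        proof -
          have "c * L powr (-t/\<alpha>) \<le> c * 1" using Lt cpos by (intro mult_left_mono) auto
          also have "\<dots> \<le> 1 / (exp 1 * K2)" by (simp add: c_def)
          finally show ?thesis .
        qed
        ultimately show ?thesis using R1 by (simp add: L_def)
      qed
    qed
  qed
  show ?thesis using cpos Cpos x0pos main unfolding B_def G_def t_def \<alpha>_def by blast
qed

lemma ep_tail:
  fixes p s :: real
  assumes hl: "\<forall>j\<ge>1. (l j)\<^sup>2 = real j powr (-2 * s)" and p: "p > 0"
  shows "\<exists>K>0. \<forall>x m. 0 < x \<longrightarrow> 1 \<le> m \<longrightarrow> 2 * (- ln x) \<le> real m powr (2*p) \<longrightarrow>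
     (\<Sum>\<^sub>\<infinity>j\<in>{m<..}. (l j)\<^sup>2 / exp (real j powr (2 * p) - 1)) \<le> K * x"
proof -
  have pp: "2*p > 0" using p by simp
  obtain K4 where K4: "K4 > 0" "\<And>u. 1 \<le> u \<Longrightarrow> u powr (2 - 2 * s) \<le> K4 * exp (1/2 * u powr (2*p))"
    using poly_exp[OF pp, of "1/2" "2 - 2 * s"] by auto
  show ?thesis
  proof (intro exI[of _ "exp 1 * K4"] conjI allI impI)
    show "exp 1 * K4 > 0" using K4 by simp
    fix x :: real and m :: nat
    assume x: "0 < x" and m: "1 \<le> m" and mL: "2 * (- ln x) \<le> real m powr (2*p)"
    define f where "f = (\<lambda>j. (l j)\<^sup>2 / exp (real j powr (2 * p) - 1))"
    have fb: "f j \<le> (exp 1 * K4 * x) * real j powr (-2)" if j: "m < j" for j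
    proof -
      have j1: "1 \<le> j" using j m by simp
      have jpos: "real j > 0" using j1 by simp
      define E where "E = exp (1/2 * real j powr (2*p))"
      have Epos: "E > 0" by (simp add: E_def)
      have "real m powr (2*p) \<le> real j powr (2*p)" using j m pp by (intro powr_mono2) auto
      hence "- ln x \<le> 1/2 * real j powr (2*p)" using mL by simp
      hence "exp (- ln x) \<le> E" unfolding E_def by simp
      hence iE: "1 / E \<le> x" using x Epos by (simp add: exp_minus field_simps)
      have fj: "f j = exp 1 * (real j powr (2 - 2 * s) * real j powr (-2)) / (E * E)"
      proof -
        have "real j powr (2 - 2 * s) * real j powr (-2) = real j powr (2 - 2 * s + -2)" by (rule powr_add[symmetric])
        also have "\<dots> = real j powr (-2 * s)" by (rule arg_cong[where f="\<lambda>e. real j powr e"]) simp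
        finally have e1: "real j powr (2 - 2 * s) * real j powr (-2) = real j powr (-2 * s)" .
        have "E * E = exp (real j powr (2*p))" unfolding E_def by (simp add: mult_exp_exp)
        moreover have "exp (real j powr (2 * p) - 1) = exp (real j powr (2*p)) / exp 1" by (rule exp_diff)
        ultimately show ?thesis unfolding f_def using hl j1 e1 by simp
      qed
      also have "\<dots> \<le> exp 1 * (K4 * E * real j powr (-2)) / (E * E)"
        using K4(2)[of "real j"] j1 Epos by (intro divide_right_mono mult_left_mono mult_right_mono) (auto simp: E_def)
      also have "\<dots> = exp 1 * K4 * real j powr (-2) * (1 / E)" using Epos by (simp add: field_simps)
      also have "\<dots> \<le> exp 1 * K4 * real j powr (-2) * x" using iE K4 by (intro mult_left_mono) auto
      finally show ?thesis by (simp add: mult_ac)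
    qed
    have "infsum f {m<..} \<le> exp 1 * K4 * x"
    proof (rule tail_infsum_le(2))
      show "\<And>j. m < j \<Longrightarrow> 0 \<le> f j" by (simp add: f_def)
      fix N
      have "(\<Sum>j\<in>{m<..N}. f j) \<le> (\<Sum>j\<in>{m<..N}. (exp 1 * K4 * x) * real j powr (-2))"
        using fb by (intro sum_mono) auto
      also have "\<dots> = (exp 1 * K4 * x) * (\<Sum>j\<in>{m<..N}. real j powr (-2))" by (simp add: sum_distrib_left)
      also have "\<dots> \<le> (exp 1 * K4 * x) * (real m powr (1 - 2) / (2 - 1))"
        using power_tail_sum[of 2 m N] m K4 x by (intro mult_left_mono) auto
      also have "\<dots> \<le> (exp 1 * K4 * x) * 1"
      proof -
        have "real m powr (1 - 2) \<le> real m powr 0" using m by (intro powr_mono) auto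
        hence "real m powr (1 - 2) / (2 - 1) \<le> 1" using m by simp
        thus ?thesis using K4 x by (intro mult_left_mono) auto
      qed
      finally show "(\<Sum>j\<in>{m<..N}. f j) \<le> exp 1 * K4 * x" by simp
    qed
    thus "(\<Sum>\<^sub>\<infinity>j\<in>{m<..}. (l j)\<^sup>2 / exp (real j powr (2 * p) - 1)) \<le> exp 1 * K4 * x"
      by (simp add: f_def)
  qed
qed

lemma S_ge1:
  fixes a s :: real
  assumes hl: "\<forall>j\<ge>1. (l j)\<^sup>2 = real j powr (-2 * s)" and m: "1 \<le> m"
  shows "1 \<le> (\<Sum>j=1..m. (l j)\<^sup>2 / real j powr (-2*a))"
proof -
  have "(\<Sum>j=1..m. (l j)\<^sup>2 / real j powr (-2*a)) = (l 1)\<^sup>2 / real 1 powr (-2*a) + (\<Sum>j\<in>{1<..m}. (l j)\<^sup>2 / real j powr (-2*a))"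
    by (rule sum_split1[OF m])
  moreover have "(l 1)\<^sup>2 / real 1 powr (-2*a) = 1" using hl by simp
  moreover have "0 \<le> (\<Sum>j\<in>{1<..m}. (l j)\<^sup>2 / real j powr (-2*a))" by (intro sum_nonneg) auto
  ultimately show ?thesis by linarith
qed

lemma EP_upper:
  fixes p a s :: real
  assumes hl: "\<forall>j\<ge>1. (l j)\<^sup>2 = real j powr (-2 * s)" and p: "p > 0" and a: "a > 0"
  shows "\<exists>K>0. \<forall>x. 0 < x \<longrightarrow> x \<le> exp (-1) \<longrightarrow> (\<exists>m. 1 \<le> m \<and> (2*(-ln x)) powr (1/(2*p)) \<le> real m
     \<and> real m \<le> 2 * (2*(-ln x)) powr (1/(2*p))
     \<and> Rstar (\<lambda>j. exp (real j powr (2 * p) - 1)) (\<lambda>j. real j powr (-2 * a)) l x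
        \<le> x * (K + (\<Sum>j=1..m. real j powr (2*a-2 * s))))"
proof -
  define B where "B = (\<lambda>j. exp (real j powr (2 * p) - 1))"
  define G where "G = (\<lambda>j::nat. real j powr (-2 * a))"
  have pp: "2*p > 0" using p by simp
  obtain K where K: "K > 0" "\<And>x m. 0 < x \<Longrightarrow> 1 \<le> m \<Longrightarrow> 2 * (- ln x) \<le> real m powr (2*p) \<Longrightarrow>
     (\<Sum>\<^sub>\<infinity>j\<in>{m<..}. (l j)\<^sup>2 / B j) \<le> K * x"
    using ep_tail[OF hl p] unfolding B_def by blast
  have Bnn: "\<And>j. 0 \<le> B j" by (simp add: B_def)
  show ?thesis
  proof (intro exI[of _ K] conjI allI impI)
    show "K > 0" by (rule K(1))
    fix x :: real assume x: "0 < x" "x \<le> exp (-1)"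
    define L where "L = - ln x"
    have L1: "1 \<le> L" using ln_le_cancel_iff[of x "exp (-1)"] x by (simp add: L_def)
    define y where "y = (2 * L) powr (1/(2*p))"
    have y1: "1 \<le> y" unfolding y_def using L1 pp by (intro ge_one_powr_ge_zero) auto
    define m where "m = nat \<lceil>y\<rceil>"
    have m: "1 \<le> m" "y \<le> real m" "real m \<le> 2 * y" using ceil_bounds[OF y1] by (auto simp: m_def)
    have mpos: "real m > 0" using m by simp
    have ya: "y powr (2*p) = 2 * L" using L1 pp by (simp add: y_def powr_powr)
    have mL: "2 * L \<le> real m powr (2*p)" using m y1 pp ya by (metis powr_mono2 less_imp_le zero_le_one order.trans)
    have A: "(\<Sum>\<^sub>\<infinity>j\<in>{m<..}. (l j)\<^sup>2 / B j) \<le> K * x" using K(2)[OF x(1) m(1)] mL by (simp add: L_def)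
    have xL: "x = exp (-L)" using x by (simp add: L_def)
    have rat: "G m / B m \<le> x"
    proof -
      have "real m powr (-2*a) \<le> real m powr 0" using m a by (intro powr_mono) auto
      hence g1: "G m \<le> 1" using m by (simp add: G_def)
      have eB: "exp (2 * L - 1) \<le> B m" using mL by (simp add: B_def)
      have "exp (-L) * exp (2 * L - 1) = exp (-L + (2 * L - 1))" by (rule mult_exp_exp)
      also have "-L + (2 * L - 1) = L - 1" by simp
      finally have "x * exp (2 * L - 1) = exp (L - 1)" using xL by simp
      moreover have "1 \<le> exp (L - 1)" using L1 by simp
      ultimately have x1: "1 \<le> x * exp (2 * L - 1)" by simp
      have "G m / B m \<le> 1 / B m" using g1 Bnn[of m] by (intro divide_right_mono) (auto simp: G_def)
      also have "\<dots> \<le> 1 / exp (2 * L - 1)" using eB by (intro divide_left_mono) (auto simp: B_def)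
      also have "\<dots> \<le> x" using x1 by (simp add: divide_le_eq mult.commute)
      finally show ?thesis .
    qed
    have Sn: "0 \<le> (\<Sum>j=1..m. (l j)\<^sup>2 / G j)" by (intro sum_nonneg) (auto simp: G_def)
    have Bb: "max (G m / B m) x * (\<Sum>j=1..m. (l j)\<^sup>2 / G j) \<le> x * (\<Sum>j=1..m. real j powr (2*a-2 * s))"
      using rat psum_terms[OF hl, where a=a and m=m] Sn by (simp add: G_def)
    have "Rstar B G l x \<le> Rm B G l m x" by (rule Rstar_le[OF Bnn m(1)])
    also have "\<dots> \<le> max (K * x) (x * (\<Sum>j=1..m. real j powr (2*a-2 * s)))" by (rule Rm_le[OF A Bb])
    also have "\<dots> \<le> x * (K + (\<Sum>j=1..m. real j powr (2*a-2 * s)))"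
    proof -
      have "0 \<le> (\<Sum>j=1..m. real j powr (2*a-2 * s))" by (intro sum_nonneg) auto
      thus ?thesis using x K(1) by (simp add: algebra_simps)
    qed
    finally show "\<exists>m. 1 \<le> m \<and> (2*(-ln x)) powr (1/(2*p)) \<le> real m
     \<and> real m \<le> 2 * (2*(-ln x)) powr (1/(2*p))
     \<and> Rstar (\<lambda>j. exp (real j powr (2 * p) - 1)) (\<lambda>j. real j powr (-2 * a)) l x
        \<le> x * (K + (\<Sum>j=1..m. real j powr (2*a-2 * s)))"
      using m unfolding B_def G_def y_def L_def by blast
  qed
qed

lemma EP_small:
  fixes p a s k :: real
  assumes hl: "\<forall>j\<ge>1. (l j)\<^sup>2 = real j powr (-2 * s)" and p: "p > 0" and a: "a > 0" and k: "k \<ge> 0"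
  shows "\<exists>c>0. \<forall>x m. 0 < x \<longrightarrow> x \<le> exp (-1) \<longrightarrow> 1 \<le> m \<longrightarrow> real m powr (2*p) < (- ln x) / 2 \<longrightarrow>
     c * (x * (- ln x) powr k) \<le> Rm (\<lambda>j. exp (real j powr (2 * p) - 1)) (\<lambda>j. real j powr (-2 * a)) l m x"
proof -
  define B where "B = (\<lambda>j. exp (real j powr (2 * p) - 1))"
  define G where "G = (\<lambda>j::nat. real j powr (-2 * a))"
  obtain C where C: "C > 0" "\<And>u. 1 \<le> u \<Longrightarrow> u powr (k + a/p) \<le> C * exp (1/2 * u powr 1)"
    using poly_exp[of 1 "1/2" "k + a/p"] by auto
  show ?thesis
  proof (intro exI[of _ "1/C"] conjI allI impI)
    show "1/C > 0" using C by simp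
    fix x :: real and m :: nat
    assume x: "0 < x" "x \<le> exp (-1)" and m: "1 \<le> m" and mL: "real m powr (2*p) < (- ln x) / 2"
    define L where "L = - ln x"
    have L1: "1 \<le> L" using ln_le_cancel_iff[of x "exp (-1)"] x by (simp add: L_def)
    have Lpos: "L > 0" using L1 by simp
    have xL: "x = exp (-L)" using x by (simp add: L_def)
    have mpos: "real m > 0" using m by simp
    have mp: "real m powr (2*p) > 0" using mpos by simp
    have Sn: "0 \<le> (\<Sum>j=1..m. (l j)\<^sup>2 / G j)" by (intro sum_nonneg) (auto simp: G_def)
    have S1: "1 \<le> (\<Sum>j=1..m. (l j)\<^sup>2 / G j)" unfolding G_def by (rule S_ge1[OF hl m])
    have R1: "G m / B m \<le> Rm B G l m x"
    proof -
      have "G m / B m * 1 \<le> G m / B m * (\<Sum>j=1..m. (l j)\<^sup>2 / G j)"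
        using S1 by (intro mult_left_mono) (auto simp: G_def B_def)
      also have "\<dots> \<le> Rm B G l m x" by (rule Rm_ge_x(2)[OF Sn])
      finally show ?thesis by simp
    qed
    have gm: "L powr (-a/p) \<le> G m"
    proof -
      have "L powr (-a/p) \<le> (L/2) powr (-a/p)" using Lpos a p by (intro powr_mono2') (auto simp: divide_nonneg_nonneg)
      also have "\<dots> \<le> (real m powr (2*p)) powr (-a/p)" using mL mp a p
        by (intro powr_mono2') (auto simp: L_def divide_nonneg_nonneg)
      also have "\<dots> = G m" using p mpos by (simp add: G_def powr_powr)
      finally show ?thesis .
    qed
    have bm: "exp (- (L/2)) \<le> 1 / B m"
    proof -
      have "1 / B m = exp (1 - real m powr (2*p))" by (simp add: B_def exp_diff)
      moreover have "- (L/2) \<le> 1 - real m powr (2*p)" using mL by (simp add: L_def)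
      ultimately show ?thesis by simp
    qed
    have "L powr (-a/p) * exp (- (L/2)) \<le> G m * (1 / B m)"
      using gm bm by (intro mult_mono) (auto simp: G_def)
    hence R2: "L powr (-a/p) * exp (- (L/2)) \<le> Rm B G l m x" using R1 by simp
    have "L powr (k + a/p) \<le> C * exp (1/2 * L)" using C(2)[OF L1] Lpos by simp
    hence "L powr k * L powr (a/p) \<le> C * exp (L/2)" by (simp add: powr_add)
    hence "exp (-L) * (L powr k * L powr (a/p)) \<le> exp (-L) * (C * exp (L/2))" by (intro mult_left_mono) auto
    moreover have "exp (-L) * exp (L/2) = exp (- (L/2))"
    proof -
      have "exp (-L) * exp (L/2) = exp (-L + L/2)" by (rule mult_exp_exp)
      also have "-L + L/2 = - (L/2)" by simp
      finally show ?thesis .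
    qed
    ultimately have "exp (-L) * L powr k * L powr (a/p) \<le> C * exp (- (L/2))" by (simp add: mult_ac)
    hence "exp (-L) * L powr k * L powr (a/p) * L powr (-a/p) \<le> C * exp (- (L/2)) * L powr (-a/p)"
      by (intro mult_right_mono) auto
    moreover have "L powr (a/p) * L powr (-a/p) = 1" using Lpos by (simp add: powr_add[symmetric])
    ultimately have "exp (-L) * L powr k \<le> C * (L powr (-a/p) * exp (- (L/2)))" by (simp add: mult_ac)
    hence "1/C * (x * L powr k) \<le> L powr (-a/p) * exp (- (L/2))" using C(1) xL by (simp add: field_simps)
    thus "1/C * (x * (- ln x) powr k) \<le> Rm (\<lambda>j. exp (real j powr (2 * p) - 1)) (\<lambda>j. real j powr (-2 * a)) l m x"
      using R2 unfolding B_def G_def L_def by linarith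
  qed
qed

lemma EP1:
  fixes p a s :: real
  assumes hl: "\<forall>j\<ge>1. (l j)\<^sup>2 = real j powr (-2 * s)" and p: "p > 0" and a: "a > 0" and r: "2*a-2 * s > -1"
  shows "\<exists>c C. 0 < c \<and> 0 < C \<and> (\<forall>x. 0 < x \<longrightarrow> x \<le> exp (-1) \<longrightarrow>
     c * (x * (- ln x) powr ((2*a-2 * s+1)/(2*p))) \<le> Rstar (\<lambda>j. exp (real j powr (2 * p) - 1)) (\<lambda>j. real j powr (-2 * a)) l x
   \<and> Rstar (\<lambda>j. exp (real j powr (2 * p) - 1)) (\<lambda>j. real j powr (-2 * a)) l x \<le> C * (x * (- ln x) powr ((2*a-2 * s+1)/(2*p))))"
proof -
  define r where "r = 2*a-2 * s"
  define \<kappa> where "\<kappa> = (r+1)/(2*p)"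
  define B where "B = (\<lambda>j. exp (real j powr (2 * p) - 1))"
  define G where "G = (\<lambda>j::nat. real j powr (-2 * a))"
  have rr: "r > -1" using r by (simp add: r_def)
  have kp: "\<kappa> > 0" using rr p by (simp add: \<kappa>_def)
  have pp: "2*p > 0" using p by simp
  obtain K where K: "K > 0" "\<And>x. 0 < x \<Longrightarrow> x \<le> exp (-1) \<Longrightarrow> (\<exists>m. 1 \<le> m \<and> (2*(-ln x)) powr (1/(2*p)) \<le> real m
     \<and> real m \<le> 2 * (2*(-ln x)) powr (1/(2*p)) \<and> Rstar B G l x \<le> x * (K + (\<Sum>j=1..m. real j powr r)))"
    using EP_upper[OF hl p a] unfolding B_def G_def r_def by blast
  obtain c1 where c1: "c1 > 0" "\<And>x m. 0 < x \<Longrightarrow> x \<le> exp (-1) \<Longrightarrow> 1 \<le> m \<Longrightarrow> real m powr (2*p) < (- ln x) / 2 \<Longrightarrow>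
     c1 * (x * (- ln x) powr \<kappa>) \<le> Rm B G l m x"
    using EP_small[OF hl p a, of \<kappa>] kp unfolding B_def G_def by auto
  define K1 where "K1 = max 1 (1/(r+1))"
  define k1 where "k1 = min 1 (1/(r+1))"
  have k1pos: "k1 > 0" using rr by (simp add: k1_def)
  define c where "c = min c1 (k1 * 2 powr (-\<kappa>))"
  define C where "C = K + K1 * 2 powr (r+1) * 2 powr \<kappa>"
  have cpos: "c > 0" using c1 k1pos by (simp add: c_def)
  have Cpos: "C > 0" using K rr by (simp add: C_def K1_def add_pos_pos)
  have S: "\<And>m. (\<Sum>j=1..m. (l j)\<^sup>2 / G j) = (\<Sum>j=1..m. real j powr r)"
    using psum_terms[OF hl] by (simp add: G_def r_def)
  have main: "c * (x * (- ln x) powr \<kappa>) \<le> Rstar B G l x \<and> Rstar B G l x \<le> C * (x * (- ln x) powr \<kappa>)"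
    if x: "0 < x" "x \<le> exp (-1)" for x
  proof
    define L where "L = - ln x"
    have L1: "1 \<le> L" using ln_le_cancel_iff[of x "exp (-1)"] x by (simp add: L_def)
    have Lpos: "L > 0" using L1 by simp
    have Lk: "1 \<le> L powr \<kappa>" using L1 kp by (intro ge_one_powr_ge_zero) auto
    show "Rstar B G l x \<le> C * (x * (- ln x) powr \<kappa>)"
    proof -
      obtain m where m: "1 \<le> m" "(2*L) powr (1/(2*p)) \<le> real m" "real m \<le> 2 * (2*L) powr (1/(2*p))"
        "Rstar B G l x \<le> x * (K + (\<Sum>j=1..m. real j powr r))"
        using K(2)[OF x] unfolding L_def by blast
      have "(\<Sum>j=1..m. real j powr r) \<le> K1 * real m powr (r+1)" unfolding K1_def using psum_pos(2)[OF rr m(1)] .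
      also have "\<dots> \<le> K1 * (2 * (2*L) powr (1/(2*p))) powr (r+1)"
        using m rr by (intro mult_left_mono powr_mono2) (auto simp: K1_def)
      also have "(2 * (2*L) powr (1/(2*p))) powr (r+1) = 2 powr (r+1) * 2 powr \<kappa> * L powr \<kappa>"
        using Lpos pp by (simp add: powr_mult powr_powr \<kappa>_def)
      finally have Sb: "(\<Sum>j=1..m. real j powr r) \<le> K1 * 2 powr (r+1) * 2 powr \<kappa> * L powr \<kappa>" by (simp add: mult_ac)
      have "K \<le> K * L powr \<kappa>" using K Lk by simp
      hence "K + (\<Sum>j=1..m. real j powr r) \<le> C * L powr \<kappa>" using Sb by (simp add: C_def algebra_simps)
      hence "x * (K + (\<Sum>j=1..m. real j powr r)) \<le> x * (C * L powr \<kappa>)" using x by (intro mult_left_mono) auto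
      thus ?thesis using m(4) by (simp add: L_def mult_ac)
    qed
    show "c * (x * (- ln x) powr \<kappa>) \<le> Rstar B G l x"
    proof (rule Rstar_ge)
      fix m :: nat assume m: "1 \<le> m"
      have mpos: "real m > 0" using m by simp
      show "c * (x * (- ln x) powr \<kappa>) \<le> Rm B G l m x"
      proof (cases "real m powr (2*p) < L / 2")
        case True
        have "c * (x * (- ln x) powr \<kappa>) \<le> c1 * (x * (- ln x) powr \<kappa>)"
          using x by (intro mult_right_mono) (auto simp: c_def)
        also have "\<dots> \<le> Rm B G l m x" using c1(2)[OF x m] True by (simp add: L_def)
        finally show ?thesis .
      next
        case False
        have "(L/2) powr (1/(2*p)) \<le> (real m powr (2*p)) powr (1/(2*p))" using False Lpos pp by (intro powr_mono2) auto
        also have "\<dots> = real m" using pp mpos by (simp add: powr_powr)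
        finally have mL: "(L/2) powr (1/(2*p)) \<le> real m" .
        have "((L/2) powr (1/(2*p))) powr (r+1) \<le> real m powr (r+1)" using mL rr by (intro powr_mono2) auto
        moreover have "((L/2) powr (1/(2*p))) powr (r+1) = 2 powr (-\<kappa>) * L powr \<kappa>"
          using Lpos pp by (simp add: powr_powr powr_divide powr_minus \<kappa>_def field_simps)
        ultimately have mk: "2 powr (-\<kappa>) * L powr \<kappa> \<le> real m powr (r+1)" by simp
        have "c * (x * L powr \<kappa>) \<le> (k1 * 2 powr (-\<kappa>)) * (x * L powr \<kappa>)"
          using x by (intro mult_right_mono) (auto simp: c_def)
        also have "\<dots> = x * (k1 * (2 powr (-\<kappa>) * L powr \<kappa>))" by (simp add: mult_ac)
        also have "\<dots> \<le> x * (k1 * real m powr (r+1))" using mk x k1pos by (intro mult_left_mono) auto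
        also have "\<dots> \<le> x * (\<Sum>j=1..m. (l j)\<^sup>2 / G j)"
          unfolding S k1_def using psum_pos(1)[OF rr m] x by (intro mult_left_mono) auto
        also have "\<dots> \<le> Rm B G l m x" by (rule Rm_ge_x(1)) (intro sum_nonneg, auto simp: G_def)
        finally show ?thesis by (simp add: L_def)
      qed
    qed
  qed
  show ?thesis using cpos Cpos main unfolding B_def G_def \<kappa>_def r_def by blast
qed

lemma EP2:
  fixes p a s :: real
  assumes hl: "\<forall>j\<ge>1. (l j)\<^sup>2 = real j powr (-2 * s)" and p: "p > 0" and a: "a > 0" and r: "2*a-2 * s = -1"
  shows "\<exists>c C. 0 < c \<and> 0 < C \<and> (\<forall>x. 0 < x \<longrightarrow> x \<le> exp (- exp 2) \<longrightarrow>
     c * (x * ln (- ln x)) \<le> Rstar (\<lambda>j. exp (real j powr (2 * p) - 1)) (\<lambda>j. real j powr (-2 * a)) l x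
   \<and> Rstar (\<lambda>j. exp (real j powr (2 * p) - 1)) (\<lambda>j. real j powr (-2 * a)) l x \<le> C * (x * ln (- ln x)))"
proof -
  define B where "B = (\<lambda>j. exp (real j powr (2 * p) - 1))"
  define G where "G = (\<lambda>j::nat. real j powr (-2 * a))"
  have pp: "2*p > 0" using p by simp
  obtain K where K: "K > 0" "\<And>x. 0 < x \<Longrightarrow> x \<le> exp (-1) \<Longrightarrow> (\<exists>m. 1 \<le> m \<and> (2*(-ln x)) powr (1/(2*p)) \<le> real m
     \<and> real m \<le> 2 * (2*(-ln x)) powr (1/(2*p)) \<and> Rstar B G l x \<le> x * (K + (\<Sum>j=1..m. real j powr (-1))))"
    using EP_upper[OF hl p a] r unfolding B_def G_def by auto
  obtain c1 where c1: "c1 > 0" "\<And>x m. 0 < x \<Longrightarrow> x \<le> exp (-1) \<Longrightarrow> 1 \<le> m \<Longrightarrow> real m powr (2*p) < (- ln x) / 2 \<Longrightarrow>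
     c1 * (x * (- ln x) powr 1) \<le> Rm B G l m x"
    using EP_small[OF hl p a, of 1] unfolding B_def G_def by auto
  define c where "c = min c1 (1/(4*p))"
  define C where "C = K + 2 + 2/(2*p)"
  have cpos: "c > 0" using c1 p by (simp add: c_def)
  have Cpos: "C > 0" using K p by (simp add: C_def add_pos_pos)
  have S: "\<And>m. (\<Sum>j=1..m. (l j)\<^sup>2 / G j) = (\<Sum>j=1..m. real j powr (-1))"
    using psum_terms[OF hl] r by (simp add: G_def)
  have e2: "exp (-1) \<ge> exp (- exp (2::real))"
  proof -
    have "(1::real) \<le> exp 2" by simp
    thus ?thesis by simp
  qed
  have ln2: "ln (2::real) \<le> 1" using ln_le_minus_one[of 2] by simp
  have main: "c * (x * ln (- ln x)) \<le> Rstar B G l x \<and> Rstar B G l x \<le> C * (x * ln (- ln x))"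
    if x: "0 < x" "x \<le> exp (- exp 2)" for x
  proof
    define L where "L = - ln x"
    have x1: "x \<le> exp (-1)" using x e2 by linarith
    have LL: "exp 2 \<le> L" using ln_le_cancel_iff[of x "exp (- exp 2)"] x by (simp add: L_def)
    have Lpos: "L > 0" using LL by (smt (verit) exp_gt_zero)
    have lnL: "2 \<le> ln L" using LL Lpos by (metis ln_exp ln_le_cancel_iff exp_gt_zero)
    show "Rstar B G l x \<le> C * (x * ln (- ln x))"
    proof -
      obtain m where m: "1 \<le> m" "(2*L) powr (1/(2*p)) \<le> real m" "real m \<le> 2 * (2*L) powr (1/(2*p))"
        "Rstar B G l x \<le> x * (K + (\<Sum>j=1..m. real j powr (-1)))"
        using K(2)[OF x(1) x1] unfolding L_def by blast
      have mpos: "real m > 0" using m by simp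
      have "(\<Sum>j=1..m. real j powr (-1)) \<le> 1 + ln (real m)" by (rule psum_harm(2)[OF m(1)])
      also have "ln (real m) \<le> ln (2 * (2*L) powr (1/(2*p)))" using m mpos Lpos by simp
      also have "\<dots> = ln 2 + (ln 2 + ln L) / (2*p)" using Lpos pp by (simp add: ln_mult ln_powr)
      finally have "(\<Sum>j=1..m. real j powr (-1)) \<le> 1 + (ln 2 + (ln 2 + ln L) / (2*p))" by simp
      also have "\<dots> \<le> (2 + 2/(2*p)) * ln L"
      proof -
        have "(ln 2 + ln L) / (2*p) \<le> (2 * ln L) / (2*p)" using ln2 lnL pp by (intro divide_right_mono) auto
        thus ?thesis using ln2 lnL pp by (simp add: algebra_simps)
      qed
      finally have Sb: "(\<Sum>j=1..m. real j powr (-1)) \<le> (2 + 2/(2*p)) * ln L" .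
      have "K \<le> K * ln L" using K lnL by simp
      hence "K + (\<Sum>j=1..m. real j powr (-1)) \<le> C * ln L" using Sb by (simp add: C_def algebra_simps)
      hence "x * (K + (\<Sum>j=1..m. real j powr (-1))) \<le> x * (C * ln L)" using x by (intro mult_left_mono) auto
      thus ?thesis using m(4) by (simp add: L_def mult_ac)
    qed
    show "c * (x * ln (- ln x)) \<le> Rstar B G l x"
    proof (rule Rstar_ge)
      fix m :: nat assume m: "1 \<le> m"
      have mpos: "real m > 0" using m by simp
      have xl: "0 \<le> x * ln L" using x lnL by simp
      show "c * (x * ln (- ln x)) \<le> Rm B G l m x"
      proof (cases "real m powr (2*p) < L / 2")
        case True
        have "c * (x * ln L) \<le> c1 * (x * ln L)" using xl by (intro mult_right_mono) (auto simp: c_def)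
        also have "\<dots> \<le> c1 * (x * L)" using c1 x Lpos by (intro mult_left_mono) (auto simp: ln_le_minus_one[of L] intro: order.trans[OF ln_le_minus_one])
        also have "\<dots> \<le> Rm B G l m x" using c1(2)[OF x(1) x1 m] True Lpos by (simp add: L_def)
        finally show ?thesis by (simp add: L_def)
      next
        case False
        have le: "L/2 \<le> real m powr (2*p)" using False by simp
        have "ln (L/2) \<le> ln (real m powr (2*p))" using le Lpos mpos by (subst ln_le_cancel_iff) auto
        also have "\<dots> = 2*p * ln (real m)" using mpos by (simp add: ln_powr)
        finally have h1: "ln (L/2) / (2*p) \<le> ln (real m)" using pp by (simp add: field_simps)
        have h2: "ln L / 2 \<le> ln (L/2)" using Lpos lnL ln2 by (simp add: ln_div)
        have "ln L / (4*p) \<le> ln (L/2) / (2*p)" using h2 pp by (simp add: field_simps)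
        also have "\<dots> \<le> ln (real m)" by (rule h1)
        also have "\<dots> \<le> ln (real m + 1)" using mpos by simp
        also have "\<dots> \<le> (\<Sum>j=1..m. (l j)\<^sup>2 / G j)" unfolding S by (rule psum_harm(1)[OF m])
        finally have "x * (ln L / (4*p)) \<le> x * (\<Sum>j=1..m. (l j)\<^sup>2 / G j)" using x by (intro mult_left_mono) auto
        also have "\<dots> \<le> Rm B G l m x" by (rule Rm_ge_x(1)) (intro sum_nonneg, auto simp: G_def)
        finally have "(1/(4*p)) * (x * ln L) \<le> Rm B G l m x" by (simp add: mult_ac)
        moreover have "c * (x * ln L) \<le> (1/(4*p)) * (x * ln L)" using xl by (intro mult_right_mono) (auto simp: c_def)
        ultimately show ?thesis by (simp add: L_def)
      qed
    qed
  qed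
  show ?thesis using cpos Cpos main unfolding B_def G_def by blast
qed

lemma EP3:
  fixes p a s :: real
  assumes hl: "\<forall>j\<ge>1. (l j)\<^sup>2 = real j powr (-2 * s)" and p: "p > 0" and a: "a > 0" and r: "2*a-2 * s < -1"
  shows "\<exists>c C. 0 < c \<and> 0 < C \<and> (\<forall>x. 0 < x \<longrightarrow> x \<le> exp (-1) \<longrightarrow>
     c * x \<le> Rstar (\<lambda>j. exp (real j powr (2 * p) - 1)) (\<lambda>j. real j powr (-2 * a)) l x
   \<and> Rstar (\<lambda>j. exp (real j powr (2 * p) - 1)) (\<lambda>j. real j powr (-2 * a)) l x \<le> C * x)"
proof -
  define r where "r = 2*a-2 * s"
  define B where "B = (\<lambda>j. exp (real j powr (2 * p) - 1))"
  define G where "G = (\<lambda>j::nat. real j powr (-2 * a))"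
  obtain K where K: "K > 0" "\<And>x. 0 < x \<Longrightarrow> x \<le> exp (-1) \<Longrightarrow> (\<exists>m. 1 \<le> m \<and> (2*(-ln x)) powr (1/(2*p)) \<le> real m
     \<and> real m \<le> 2 * (2*(-ln x)) powr (1/(2*p)) \<and> Rstar B G l x \<le> x * (K + (\<Sum>j=1..m. real j powr r)))"
    using EP_upper[OF hl p a] unfolding B_def G_def r_def by blast
  define C where "C = K + 1 + 1/(-r-1)"
  have rr: "r < -1" using r by (simp add: r_def)
  have Cpos: "C > 0" using K rr by (simp add: C_def add_pos_pos)
  have main: "1 * x \<le> Rstar B G l x \<and> Rstar B G l x \<le> C * x"
    if x: "0 < x" "x \<le> exp (-1)" for x
  proof
    show "Rstar B G l x \<le> C * x"
    proof -
      obtain m where m: "1 \<le> m" "Rstar B G l x \<le> x * (K + (\<Sum>j=1..m. real j powr r))"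
        using K(2)[OF x] by blast
      have "(\<Sum>j=1..m. real j powr r) \<le> 1 + 1/(-r-1)" by (rule psum_neg(2)[OF rr m(1)])
      hence "x * (K + (\<Sum>j=1..m. real j powr r)) \<le> x * C" using x by (intro mult_left_mono) (auto simp: C_def)
      thus ?thesis using m(2) by (simp add: mult.commute)
    qed
    show "1 * x \<le> Rstar B G l x"
    proof (rule Rstar_ge)
      fix m :: nat assume m: "1 \<le> m"
      have "x * 1 \<le> x * (\<Sum>j=1..m. (l j)\<^sup>2 / G j)" unfolding G_def using S_ge1[OF hl m] x by (intro mult_left_mono) auto
      also have "\<dots> \<le> Rm B G l m x" by (rule Rm_ge_x(1)) (intro sum_nonneg, auto simp: G_def)
      finally show "1 * x \<le> Rm B G l m x" by simp
    qed
  qed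
  show ?thesis using Cpos main unfolding B_def G_def by (intro exI[of _ 1] exI[of _ C]) auto
qed

lemma X_lim: "((\<lambda>n::nat. (1 + ln (real n)) / real n) \<longlongrightarrow> 0) at_top"
  by real_asymp

lemma X_small: "(x0::real) > 0 \<Longrightarrow> eventually (\<lambda>n::nat. (1 + ln (real n)) / real n \<le> x0) at_top"
  using order_tendstoD(2)[OF X_lim, of x0] by (auto elim: eventually_mono)

lemma X_pos: "eventually (\<lambda>n::nat. 0 < (1 + ln (real n)) / real n) at_top"
  by real_asymp

lemma X_lo: "eventually (\<lambda>n::nat. ln (real n) / real n \<le> (1 + ln (real n)) / real n) at_top"
  by real_asymp

lemma X_hi: "eventually (\<lambda>n::nat. (1 + ln (real n)) / real n \<le> 2 * (ln (real n) / real n)) at_top"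
  by real_asymp

lemma lnn_pos: "eventually (\<lambda>n::nat. 1 < ln (real n)) at_top"
  by real_asymp

lemma L_lo: "eventually (\<lambda>n::nat. ln (real n) / 2 \<le> - ln ((1 + ln (real n)) / real n)) at_top"
  by real_asymp

lemma L_hi: "eventually (\<lambda>n::nat. - ln ((1 + ln (real n)) / real n) \<le> ln (real n)) at_top"
  by real_asymp

lemma lnL_lo: "eventually (\<lambda>n::nat. ln (ln (real n)) / 2 \<le> ln (- ln ((1 + ln (real n)) / real n))) at_top"
  by real_asymp

lemma lnL_hi: "eventually (\<lambda>n::nat. ln (- ln ((1 + ln (real n)) / real n)) \<le> ln (ln (real n))) at_top"
  by real_asymp

lemma lnln_pos: "eventually (\<lambda>n::nat. 0 < ln (ln (real n))) at_top"
  by real_asymp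

lemma thetaI_bounds:
  fixes f g :: "nat \<Rightarrow> real"
  assumes "c > 0" "C > 0" "eventually (\<lambda>n. c * g n \<le> f n \<and> f n \<le> C * g n \<and> 0 \<le> g n) at_top"
  shows "f \<in> \<Theta>(g)"
proof (rule bigthetaI'[OF assms(1,2)])
  show "eventually (\<lambda>n. c * norm (g n) \<le> norm (f n) \<and> norm (f n) \<le> C * norm (g n)) at_top"
    using assms(3)
  proof (rule eventually_mono)
    fix n assume h: "c * g n \<le> f n \<and> f n \<le> C * g n \<and> 0 \<le> g n"
    hence "0 \<le> f n" using assms(1) by (smt (verit) mult_nonneg_nonneg)
    thus "c * norm (g n) \<le> norm (f n) \<and> norm (f n) \<le> C * norm (g n)" using h by simp
  qed
qed

lemma PP1_theta:
  fixes p a s :: real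
  assumes hl: "\<forall>j\<ge>1. (l j)\<^sup>2 = real j powr (-2 * s)"
    and p: "p > 0" and a: "a > 1/2" and s: "s > 1/2 - p" and sa: "s - a < 1/2"
  shows "(\<lambda>n::nat. Rstar (\<lambda>j. real j powr (2 * p)) (\<lambda>j. real j powr (-2 * a)) l ((1 + ln (real n)) / real n))
     \<in> \<Theta>(\<lambda>n. (ln (real n) / real n) powr ((2 * p + 2 * s - 1) / (2 * p + 2 * a)))"
proof -
  define e where "e = (2 * p + 2 * s - 1) / (2 * p + 2 * a)"
  have epos: "e > 0" using p a s by (simp add: e_def)
  obtain c C where cC: "0 < c" "0 < C" "\<And>x. 0 < x \<Longrightarrow> x \<le> 1 \<Longrightarrow>
     c * x powr e \<le> Rstar (\<lambda>j. real j powr (2 * p)) (\<lambda>j. real j powr (-2 * a)) l x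
   \<and> Rstar (\<lambda>j. real j powr (2 * p)) (\<lambda>j. real j powr (-2 * a)) l x \<le> C * x powr e"
  proof -
    have a0: "a > 0" using a by simp
    have t: "2*p+2 * s-1 > 0" using s by simp
    have r: "2*a-2 * s > -1" using sa by simp
    show ?thesis using PP1[OF hl p a0 t r] that unfolding e_def by blast
  qed
  show ?thesis unfolding e_def[symmetric]
  proof (rule thetaI_bounds[of c "C * 2 powr e"])
    show "0 < c" "0 < C * 2 powr e" using cC by auto
    show "eventually (\<lambda>n. c * (ln (real n) / real n) powr e \<le> Rstar (\<lambda>j. real j powr (2 * p)) (\<lambda>j. real j powr (-2 * a)) l ((1 + ln (real n)) / real n)
      \<and> Rstar (\<lambda>j. real j powr (2 * p)) (\<lambda>j. real j powr (-2 * a)) l ((1 + ln (real n)) / real n) \<le> C * 2 powr e * (ln (real n) / real n) powr e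
      \<and> 0 \<le> (ln (real n) / real n) powr e) at_top"
      using X_pos X_small[OF zero_less_one] X_lo X_hi lnn_pos
    proof eventually_elim
      case (elim n)
      define x where "x = (1 + ln (real n)) / real n"
      define T where "T = ln (real n) / real n"
      have Tpos: "T > 0" using elim by (auto simp: T_def)
      have b: "c * x powr e \<le> Rstar (\<lambda>j. real j powr (2 * p)) (\<lambda>j. real j powr (-2 * a)) l x"
        "Rstar (\<lambda>j. real j powr (2 * p)) (\<lambda>j. real j powr (-2 * a)) l x \<le> C * x powr e"
        using cC(3)[of x] elim by (auto simp: x_def)
      have "T powr e \<le> x powr e" using elim Tpos epos by (intro powr_mono2) (auto simp: x_def T_def)
      hence l: "c * T powr e \<le> c * x powr e" using cC by simp
      have "x powr e \<le> (2 * T) powr e" using elim Tpos epos by (intro powr_mono2) (auto simp: x_def T_def)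
      also have "\<dots> = 2 powr e * T powr e" using Tpos by (simp add: powr_mult)
      finally have u: "C * x powr e \<le> C * 2 powr e * T powr e" using cC by (simp add: mult_ac)
      show ?case using b l u by (simp add: x_def[symmetric] T_def[symmetric])
    qed
  qed
qed

lemma PP2_theta:
  fixes p a s :: real
  assumes hl: "\<forall>j\<ge>1. (l j)\<^sup>2 = real j powr (-2 * s)"
    and p: "p > 0" and a: "a > 1/2" and sa: "s - a = 1/2"
  shows "(\<lambda>n::nat. Rstar (\<lambda>j. real j powr (2 * p)) (\<lambda>j. real j powr (-2 * a)) l ((1 + ln (real n)) / real n))
     \<in> \<Theta>(\<lambda>n. (ln (real n))\<^sup>2 / real n)"
proof -
  obtain c C where cC: "0 < c" "0 < C" "\<And>x. 0 < x \<Longrightarrow> x \<le> exp (-1) \<Longrightarrow>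
     c * (x * (- ln x)) \<le> Rstar (\<lambda>j. real j powr (2 * p)) (\<lambda>j. real j powr (-2 * a)) l x
   \<and> Rstar (\<lambda>j. real j powr (2 * p)) (\<lambda>j. real j powr (-2 * a)) l x \<le> C * (x * (- ln x))"
  proof -
    have a0: "a > 0" using a by simp
    have r: "2*a-2 * s = -1" using sa by simp
    show ?thesis using PP2[OF hl p a0 r] that by blast
  qed
  show ?thesis
  proof (rule thetaI_bounds[of "c/2" "2 * C"])
    show "0 < c/2" "0 < 2 * C" using cC by auto
    show "eventually (\<lambda>n. c/2 * ((ln (real n))\<^sup>2 / real n) \<le> Rstar (\<lambda>j. real j powr (2 * p)) (\<lambda>j. real j powr (-2 * a)) l ((1 + ln (real n)) / real n)
      \<and> Rstar (\<lambda>j. real j powr (2 * p)) (\<lambda>j. real j powr (-2 * a)) l ((1 + ln (real n)) / real n) \<le> 2 * C * ((ln (real n))\<^sup>2 / real n)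
      \<and> 0 \<le> (ln (real n))\<^sup>2 / real n) at_top"
      using X_pos X_small[OF exp_gt_zero[of "-1"]] X_lo X_hi lnn_pos L_lo L_hi
    proof eventually_elim
      case (elim n)
      define x where "x = (1 + ln (real n)) / real n"
      define T where "T = ln (real n) / real n"
      define L where "L = - ln x"
      have Tpos: "T > 0" using elim by (auto simp: T_def)
      have b: "c * (x * L) \<le> Rstar (\<lambda>j. real j powr (2 * p)) (\<lambda>j. real j powr (-2 * a)) l x"
        "Rstar (\<lambda>j. real j powr (2 * p)) (\<lambda>j. real j powr (-2 * a)) l x \<le> C * (x * L)"
        using cC(3)[of x] elim by (auto simp: x_def L_def)
      have Lnn: "ln (real n) / 2 \<le> L" "L \<le> ln (real n)" using elim unfolding L_def x_def by linarith+
      have xT: "T \<le> x" "x \<le> 2 * T" using elim unfolding T_def x_def by simp_all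
      have lo: "T * (ln (real n) / 2) \<le> x * L" using elim Tpos Lnn xT by (intro mult_mono) auto
      have hi: "x * L \<le> (2 * T) * ln (real n)" using elim Tpos Lnn xT by (intro mult_mono) auto
      have TT: "T * ln (real n) = (ln (real n))\<^sup>2 / real n" by (simp add: T_def power2_eq_square)
      have l1: "c * (T * (ln (real n) / 2)) \<le> c * (x * L)" by (rule mult_left_mono[OF lo]) (use cC(1) in simp)
      have l2: "c * (T * (ln (real n) / 2)) = c/2 * ((ln (real n))\<^sup>2 / real n)" using TT by (simp add: field_simps)
      have u1: "C * (x * L) \<le> C * ((2 * T) * ln (real n))" by (rule mult_left_mono[OF hi]) (use cC(2) in simp)
      have u2: "C * ((2 * T) * ln (real n)) = 2 * C * ((ln (real n))\<^sup>2 / real n)" by (simp add: T_def power2_eq_square)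
      have l: "c/2 * ((ln (real n))\<^sup>2 / real n) \<le> c * (x * L)" using l1 l2 by linarith
      have u: "C * (x * L) \<le> 2 * C * ((ln (real n))\<^sup>2 / real n)" using u1 u2 by linarith
      show ?case using b l u Tpos TT elim by (simp add: x_def[symmetric])
    qed
  qed
qed

lemma PP3_theta:
  fixes p a s :: real
  assumes hl: "\<forall>j\<ge>1. (l j)\<^sup>2 = real j powr (-2 * s)"
    and p: "p > 0" and a: "a > 1/2" and sa: "s - a > 1/2"
  shows "(\<lambda>n::nat. Rstar (\<lambda>j. real j powr (2 * p)) (\<lambda>j. real j powr (-2 * a)) l ((1 + ln (real n)) / real n))
     \<in> \<Theta>(\<lambda>n. ln (real n) / real n)"
proof -
  obtain c C where cC: "0 < c" "0 < C" "\<And>x. 0 < x \<Longrightarrow> x \<le> 1 \<Longrightarrow>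
     c * x \<le> Rstar (\<lambda>j. real j powr (2 * p)) (\<lambda>j. real j powr (-2 * a)) l x
   \<and> Rstar (\<lambda>j. real j powr (2 * p)) (\<lambda>j. real j powr (-2 * a)) l x \<le> C * x"
  proof -
    have a0: "a > 0" using a by simp
    have r: "2*a-2 * s < -1" using sa by simp
    show ?thesis using PP3[OF hl p a0 r] that by blast
  qed
  show ?thesis
  proof (rule thetaI_bounds[of c "2 * C"])
    show "0 < c" "0 < 2 * C" using cC by auto
    show "eventually (\<lambda>n. c * (ln (real n) / real n) \<le> Rstar (\<lambda>j. real j powr (2 * p)) (\<lambda>j. real j powr (-2 * a)) l ((1 + ln (real n)) / real n)
      \<and> Rstar (\<lambda>j. real j powr (2 * p)) (\<lambda>j. real j powr (-2 * a)) l ((1 + ln (real n)) / real n) \<le> 2 * C * (ln (real n) / real n)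
      \<and> 0 \<le> ln (real n) / real n) at_top"
      using X_pos X_small[OF zero_less_one] X_lo X_hi lnn_pos
    proof eventually_elim
      case (elim n)
      define x where "x = (1 + ln (real n)) / real n"
      have b: "c * x \<le> Rstar (\<lambda>j. real j powr (2 * p)) (\<lambda>j. real j powr (-2 * a)) l x"
        "Rstar (\<lambda>j. real j powr (2 * p)) (\<lambda>j. real j powr (-2 * a)) l x \<le> C * x"
        using cC(3)[of x] elim by (auto simp: x_def)
      have l: "c * (ln (real n) / real n) \<le> c * x" using elim cC by (intro mult_left_mono) (auto simp: x_def)
      have u: "C * x \<le> C * (2 * (ln (real n) / real n))" using elim cC by (intro mult_left_mono) (auto simp: x_def)
      show ?case using b l u elim by (simp add: x_def[symmetric] mult_ac)
    qed
  qed
qed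

lemma PE_theta:
  fixes p a s :: real
  assumes hl: "\<forall>j\<ge>1. (l j)\<^sup>2 = real j powr (-2 * s)"
    and p: "p > 0" and a: "a > 0" and s: "s > 1/2 - p"
  shows "(\<lambda>n::nat. Rstar (\<lambda>j. real j powr (2 * p)) (\<lambda>j. exp (- (real j powr (2 * a)) + 1)) l
                     ((1 + ln (real n)) / real n))
        \<in> \<Theta>(\<lambda>n. ln (real n) powr (- (2 * p + 2 * s - 1) / (2 * a)))"
proof -
  define e where "e = - (2 * p + 2 * s - 1) / (2 * a)"
  have eneg: "e \<le> 0" using p a s by (simp add: e_def divide_nonpos_pos)
  obtain c C x0 where cC: "0 < c" "0 < C" "0 < x0" "\<And>x. 0 < x \<Longrightarrow> x \<le> x0 \<Longrightarrow>
     c * (- ln x) powr e \<le> Rstar (\<lambda>j. real j powr (2 * p)) (\<lambda>j. exp (- (real j powr (2 * a)) + 1)) l x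
   \<and> Rstar (\<lambda>j. real j powr (2 * p)) (\<lambda>j. exp (- (real j powr (2 * a)) + 1)) l x \<le> C * (- ln x) powr e"
  proof -
    have t: "2*p+2 * s-1 > 0" using s by simp
    show ?thesis using PE[OF hl p a t] that unfolding e_def by blast
  qed
  show ?thesis unfolding e_def[symmetric]
  proof (rule thetaI_bounds[of c "C * 2 powr (-e)"])
    show "0 < c" "0 < C * 2 powr (-e)" using cC by auto
    show "eventually (\<lambda>n. c * ln (real n) powr e \<le> Rstar (\<lambda>j. real j powr (2 * p)) (\<lambda>j. exp (- (real j powr (2 * a)) + 1)) l ((1 + ln (real n)) / real n)
      \<and> Rstar (\<lambda>j. real j powr (2 * p)) (\<lambda>j. exp (- (real j powr (2 * a)) + 1)) l ((1 + ln (real n)) / real n) \<le> C * 2 powr (-e) * ln (real n) powr e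
      \<and> 0 \<le> ln (real n) powr e) at_top"
      using X_pos X_small[OF cC(3)] lnn_pos L_lo L_hi
    proof eventually_elim
      case (elim n)
      define x where "x = (1 + ln (real n)) / real n"
      define L where "L = - ln x"
      have b: "c * L powr e \<le> Rstar (\<lambda>j. real j powr (2 * p)) (\<lambda>j. exp (- (real j powr (2 * a)) + 1)) l x"
        "Rstar (\<lambda>j. real j powr (2 * p)) (\<lambda>j. exp (- (real j powr (2 * a)) + 1)) l x \<le> C * L powr e"
        using cC(4)[of x] elim by (auto simp: x_def L_def)
      have Lpos: "L > 0" using elim unfolding L_def x_def by linarith
      have "ln (real n) powr e \<le> L powr e" using elim eneg Lpos by (intro powr_mono2') (auto simp: L_def x_def)
      hence l: "c * ln (real n) powr e \<le> c * L powr e" using cC by simp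
      have "L powr e \<le> (ln (real n) / 2) powr e" using elim eneg by (intro powr_mono2') (auto simp: L_def x_def)
      also have "\<dots> = 2 powr (-e) * ln (real n) powr e" using elim by (simp add: powr_divide powr_minus field_simps)
      finally have u: "C * L powr e \<le> C * 2 powr (-e) * ln (real n) powr e" using cC by (simp add: mult_ac)
      show ?case using b l u by (simp add: x_def[symmetric])
    qed
  qed
qed

lemma EP1_theta:
  fixes p a s :: real
  assumes hl: "\<forall>j\<ge>1. (l j)\<^sup>2 = real j powr (-2 * s)"
    and p: "p > 0" and a: "a > 1/2" and sa: "s - a < 1/2"
  shows "(\<lambda>n::nat. Rstar (\<lambda>j. exp (real j powr (2 * p) - 1)) (\<lambda>j. real j powr (-2 * a)) l ((1 + ln (real n)) / real n))
     \<in> \<Theta>(\<lambda>n. (ln (real n) powr ((2 * p + 2 * a - 2 * s + 1) / (2 * p))) / real n)"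
proof -
  define k where "k = (2*a-2 * s+1)/(2*p)"
  have kpos: "k > 0" using p sa by (simp add: k_def)
  have ek: "(2 * p + 2 * a - 2 * s + 1) / (2 * p) = 1 + k" using p by (simp add: k_def field_simps)
  obtain c C where cC: "0 < c" "0 < C" "\<And>x. 0 < x \<Longrightarrow> x \<le> exp (-1) \<Longrightarrow>
     c * (x * (- ln x) powr k) \<le> Rstar (\<lambda>j. exp (real j powr (2 * p) - 1)) (\<lambda>j. real j powr (-2 * a)) l x
   \<and> Rstar (\<lambda>j. exp (real j powr (2 * p) - 1)) (\<lambda>j. real j powr (-2 * a)) l x \<le> C * (x * (- ln x) powr k)"
  proof -
    have a0: "a > 0" using a by simp
    have r: "2*a-2 * s > -1" using sa by simp
    show ?thesis using EP1[OF hl p a0 r] that unfolding k_def by blast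
  qed
  show ?thesis unfolding ek
  proof (rule thetaI_bounds[of "c * 2 powr (-k)" "2 * C"])
    show "0 < c * 2 powr (-k)" "0 < 2 * C" using cC by auto
    show "eventually (\<lambda>n. c * 2 powr (-k) * (ln (real n) powr (1 + k) / real n) \<le> Rstar (\<lambda>j. exp (real j powr (2 * p) - 1)) (\<lambda>j. real j powr (-2 * a)) l ((1 + ln (real n)) / real n)
      \<and> Rstar (\<lambda>j. exp (real j powr (2 * p) - 1)) (\<lambda>j. real j powr (-2 * a)) l ((1 + ln (real n)) / real n) \<le> 2 * C * (ln (real n) powr (1 + k) / real n)
      \<and> 0 \<le> ln (real n) powr (1 + k) / real n) at_top"
      using X_pos X_small[OF exp_gt_zero[of "-1"]] X_lo X_hi lnn_pos L_lo L_hi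
    proof eventually_elim
      case (elim n)
      define x where "x = (1 + ln (real n)) / real n"
      define T where "T = ln (real n) / real n"
      define L where "L = - ln x"
      have Tpos: "T > 0" using elim by (auto simp: T_def)
      have lnpos: "ln (real n) > 0" using elim by simp
      have b: "c * (x * L powr k) \<le> Rstar (\<lambda>j. exp (real j powr (2 * p) - 1)) (\<lambda>j. real j powr (-2 * a)) l x"
        "Rstar (\<lambda>j. exp (real j powr (2 * p) - 1)) (\<lambda>j. real j powr (-2 * a)) l x \<le> C * (x * L powr k)"
        using cC(3)[of x] elim by (auto simp: x_def L_def)
      have Lnn: "ln (real n) / 2 \<le> L" "L \<le> ln (real n)" using elim unfolding L_def x_def by linarith+
      have xT: "T \<le> x" "x \<le> 2 * T" using elim unfolding T_def x_def by simp_all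
      have TT: "ln (real n) powr (1 + k) / real n = T * ln (real n) powr k"
        using lnpos by (simp add: T_def powr_add)
      have Lk1: "(ln (real n) / 2) powr k \<le> L powr k" using Lnn kpos lnpos by (intro powr_mono2) auto
      have Lk2: "L powr k \<le> ln (real n) powr k" using Lnn kpos lnpos by (intro powr_mono2) auto
      have h2: "(ln (real n) / 2) powr k = 2 powr (-k) * ln (real n) powr k"
        using lnpos by (simp add: powr_divide powr_minus field_simps)
      have lo: "T * (2 powr (-k) * ln (real n) powr k) \<le> x * L powr k"
        using xT Lk1 h2 Tpos by (intro mult_mono) auto
      have hi: "x * L powr k \<le> (2 * T) * ln (real n) powr k"
        using xT Lk2 Tpos by (intro mult_mono) auto
      have l1: "c * (T * (2 powr (-k) * ln (real n) powr k)) \<le> c * (x * L powr k)" by (rule mult_left_mono[OF lo]) (use cC(1) in simp)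
      have u1: "C * (x * L powr k) \<le> C * ((2 * T) * ln (real n) powr k)" by (rule mult_left_mono[OF hi]) (use cC(2) in simp)
      have l: "c * 2 powr (-k) * (ln (real n) powr (1 + k) / real n) \<le> c * (x * L powr k)"
        using l1 unfolding TT by (simp add: mult_ac)
      have u: "C * (x * L powr k) \<le> 2 * C * (ln (real n) powr (1 + k) / real n)"
        using u1 unfolding TT by (simp add: mult_ac)
      have nn: "0 \<le> ln (real n) powr (1 + k) / real n" by simp
      show ?case using b l u nn by (simp add: x_def[symmetric] L_def[symmetric])
    qed
  qed
qed

lemma EP2_theta:
  fixes p a s :: real
  assumes hl: "\<forall>j\<ge>1. (l j)\<^sup>2 = real j powr (-2 * s)"
    and p: "p > 0" and a: "a > 1/2" and sa: "s - a = 1/2"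
  shows "(\<lambda>n::nat. Rstar (\<lambda>j. exp (real j powr (2 * p) - 1)) (\<lambda>j. real j powr (-2 * a)) l ((1 + ln (real n)) / real n))
     \<in> \<Theta>(\<lambda>n. ln (real n) * ln (ln (real n)) / real n)"
proof -
  obtain c C where cC: "0 < c" "0 < C" "\<And>x. 0 < x \<Longrightarrow> x \<le> exp (- exp 2) \<Longrightarrow>
     c * (x * ln (- ln x)) \<le> Rstar (\<lambda>j. exp (real j powr (2 * p) - 1)) (\<lambda>j. real j powr (-2 * a)) l x
   \<and> Rstar (\<lambda>j. exp (real j powr (2 * p) - 1)) (\<lambda>j. real j powr (-2 * a)) l x \<le> C * (x * ln (- ln x))"
  proof -
    have a0: "a > 0" using a by simp
    have r: "2*a-2 * s = -1" using sa by simp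
    show ?thesis using EP2[OF hl p a0 r] that by blast
  qed
  show ?thesis
  proof (rule thetaI_bounds[of "c / 2" "2 * C"])
    show "0 < c / 2" "0 < 2 * C" using cC by auto
    show "eventually (\<lambda>n. c / 2 * (ln (real n) * ln (ln (real n)) / real n) \<le> Rstar (\<lambda>j. exp (real j powr (2 * p) - 1)) (\<lambda>j. real j powr (-2 * a)) l ((1 + ln (real n)) / real n)
      \<and> Rstar (\<lambda>j. exp (real j powr (2 * p) - 1)) (\<lambda>j. real j powr (-2 * a)) l ((1 + ln (real n)) / real n) \<le> 2 * C * (ln (real n) * ln (ln (real n)) / real n)
      \<and> 0 \<le> ln (real n) * ln (ln (real n)) / real n) at_top"
      using X_pos X_small[OF exp_gt_zero[of "- exp 2"]] X_lo X_hi lnn_pos lnL_lo lnL_hi lnln_pos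
    proof eventually_elim
      case (elim n)
      define x where "x = (1 + ln (real n)) / real n"
      define T where "T = ln (real n) / real n"
      define M where "M = ln (- ln x)"
      have Tpos: "T > 0" using elim by (auto simp: T_def)
      have b: "c * (x * M) \<le> Rstar (\<lambda>j. exp (real j powr (2 * p) - 1)) (\<lambda>j. real j powr (-2 * a)) l x"
        "Rstar (\<lambda>j. exp (real j powr (2 * p) - 1)) (\<lambda>j. real j powr (-2 * a)) l x \<le> C * (x * M)"
        using cC(3)[of x] elim by (auto simp: x_def M_def)
      have Mb: "ln (ln (real n)) / 2 \<le> M" "M \<le> ln (ln (real n))" using elim unfolding M_def x_def by linarith+
      have xT: "T \<le> x" "x \<le> 2 * T" using elim unfolding T_def x_def by simp_all
      have lo: "T * (ln (ln (real n)) / 2) \<le> x * M" using xT Mb Tpos elim by (intro mult_mono) auto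
      have hi: "x * M \<le> (2 * T) * ln (ln (real n))" using xT Mb Tpos elim by (intro mult_mono) auto
      have l1: "c * (T * (ln (ln (real n)) / 2)) \<le> c * (x * M)" by (rule mult_left_mono[OF lo]) (use cC(1) in simp)
      have u1: "C * (x * M) \<le> C * ((2 * T) * ln (ln (real n)))" by (rule mult_left_mono[OF hi]) (use cC(2) in simp)
      have l: "c / 2 * (ln (real n) * ln (ln (real n)) / real n) \<le> c * (x * M)"
        using l1 by (simp add: T_def mult_ac)
      have u: "C * (x * M) \<le> 2 * C * (ln (real n) * ln (ln (real n)) / real n)"
        using u1 by (simp add: T_def mult_ac)
      have nn: "0 \<le> ln (real n) * ln (ln (real n)) / real n" using elim by simp
      show ?case using b l u nn by (simp add: x_def[symmetric] M_def[symmetric])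
    qed
  qed
qed

lemma EP3_theta:
  fixes p a s :: real
  assumes hl: "\<forall>j\<ge>1. (l j)\<^sup>2 = real j powr (-2 * s)"
    and p: "p > 0" and a: "a > 1/2" and sa: "s - a > 1/2"
  shows "(\<lambda>n::nat. Rstar (\<lambda>j. exp (real j powr (2 * p) - 1)) (\<lambda>j. real j powr (-2 * a)) l ((1 + ln (real n)) / real n))
     \<in> \<Theta>(\<lambda>n. ln (real n) / real n)"
proof -
  obtain c C where cC: "0 < c" "0 < C" "\<And>x. 0 < x \<Longrightarrow> x \<le> exp (-1) \<Longrightarrow>
     c * x \<le> Rstar (\<lambda>j. exp (real j powr (2 * p) - 1)) (\<lambda>j. real j powr (-2 * a)) l x
   \<and> Rstar (\<lambda>j. exp (real j powr (2 * p) - 1)) (\<lambda>j. real j powr (-2 * a)) l x \<le> C * x"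
  proof -
    have a0: "a > 0" using a by simp
    have r: "2*a-2 * s < -1" using sa by simp
    show ?thesis using EP3[OF hl p a0 r] that by blast
  qed
  show ?thesis
  proof (rule thetaI_bounds[of c "2 * C"])
    show "0 < c" "0 < 2 * C" using cC by auto
    show "eventually (\<lambda>n. c * (ln (real n) / real n) \<le> Rstar (\<lambda>j. exp (real j powr (2 * p) - 1)) (\<lambda>j. real j powr (-2 * a)) l ((1 + ln (real n)) / real n)
      \<and> Rstar (\<lambda>j. exp (real j powr (2 * p) - 1)) (\<lambda>j. real j powr (-2 * a)) l ((1 + ln (real n)) / real n) \<le> 2 * C * (ln (real n) / real n)
      \<and> 0 \<le> ln (real n) / real n) at_top"
      using X_pos X_small[OF exp_gt_zero[of "-1"]] X_lo X_hi lnn_pos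
    proof eventually_elim
      case (elim n)
      define x where "x = (1 + ln (real n)) / real n"
      have b: "c * x \<le> Rstar (\<lambda>j. exp (real j powr (2 * p) - 1)) (\<lambda>j. real j powr (-2 * a)) l x"
        "Rstar (\<lambda>j. exp (real j powr (2 * p) - 1)) (\<lambda>j. real j powr (-2 * a)) l x \<le> C * x"
        using cC(3)[of x] elim by (auto simp: x_def)
      have l: "c * (ln (real n) / real n) \<le> c * x" using elim cC by (intro mult_left_mono) (auto simp: x_def)
      have u: "C * x \<le> C * (2 * (ln (real n) / real n))" using elim cC by (intro mult_left_mono) (auto simp: x_def)
      show ?case using b l u elim by (simp add: x_def[symmetric] mult_ac)
    qed
  qed
qed

theorem proposition3p5:
  fixes l :: "nat \<Rightarrow> real" and s :: real
  assumes hl: "\<forall>j\<ge>1. (l j)\<^sup>2 = real j powr (-2 * s)"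
  shows
  "(\<forall>p a. p > 0 \<longrightarrow> a > 1/2 \<longrightarrow> p + a \<ge> 3/2 \<longrightarrow> s > 1/2 - p \<longrightarrow>
      (let R = (\<lambda>n::nat. Rstar (\<lambda>j. real j powr (2 * p)) (\<lambda>j. real j powr (-2 * a)) l
                            ((1 + ln (real n)) / real n))
       in (s - a < 1/2 \<longrightarrow>
             R \<in> \<Theta>(\<lambda>n. (ln (real n) / real n) powr ((2 * p + 2 * s - 1) / (2 * p + 2 * a))))
        \<and> (s - a = 1/2 \<longrightarrow> R \<in> \<Theta>(\<lambda>n. (ln (real n))\<^sup>2 / real n))
        \<and> (s - a > 1/2 \<longrightarrow> R \<in> \<Theta>(\<lambda>n. ln (real n) / real n))))
   \<and> (\<forall>p a. p > 0 \<longrightarrow> a > 0 \<longrightarrow> s > 1/2 - p \<longrightarrow>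
      (\<lambda>n::nat. Rstar (\<lambda>j. real j powr (2 * p)) (\<lambda>j. exp (- (real j powr (2 * a)) + 1)) l
                     ((1 + ln (real n)) / real n))
        \<in> \<Theta>(\<lambda>n. ln (real n) powr (- (2 * p + 2 * s - 1) / (2 * a))))
   \<and> (\<forall>p a. p > 0 \<longrightarrow> a > 1/2 \<longrightarrow>
      (let R = (\<lambda>n::nat. Rstar (\<lambda>j. exp (real j powr (2 * p) - 1)) (\<lambda>j. real j powr (-2 * a)) l
                            ((1 + ln (real n)) / real n))
       in (s - a < 1/2 \<longrightarrow>
             R \<in> \<Theta>(\<lambda>n. (ln (real n) powr ((2 * p + 2 * a - 2 * s + 1) / (2 * p))) / real n))
        \<and> (s - a = 1/2 \<longrightarrow> R \<in> \<Theta>(\<lambda>n. ln (real n) * ln (ln (real n)) / real n))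
        \<and> (s - a > 1/2 \<longrightarrow> R \<in> \<Theta>(\<lambda>n. ln (real n) / real n))))"
  unfolding Let_def
  by (intro conjI allI impI; (rule PP1_theta[OF hl] PP2_theta[OF hl] PP3_theta[OF hl] PE_theta[OF hl]
    EP1_theta[OF hl] EP2_theta[OF hl] EP3_theta[OF hl]; assumption))

end
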